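(* Let $a,b,c$ be positive integers, $R = \mathbb{Z}[x,y,z]/(x^{a+b},y^{a+c},z^{b+c})$, and $m = a+b+c-2$. Let $B_r$ be the set of monomials $x^iy^jz^k$ with $i<a+b$, $j<a+c$, $k<b+c$ and $i+j+k=r$ (the monomial $\mathbb{Z}$-basis of the degree-$r$ component $R_r$), and let $U_m: R_m \to R_{m+1}$ be multiplication by $x+y+z$, expressed as a matrix in the monomial bases $B_m$, $B_{m+1}$ (this is a square $0$-$1$ matrix). Then $\det(U_m) = \pm \operatorname{perm}(U_m)$, and the nonzero terms of the permanent $\operatorname{perm}(U_m)=\sum_{\varphi}\prod_{\lambda\in B_m}(U_m)_{\varphi(\lambda),\lambda}$ (sum over bijections $\varphi: B_m\to B_{m+1}$; a term is nonzero iff $\varphi(\lambda)/\lambda\in\{x,y,z\}$ for all $\lambda$) are in natural bijection with the plane partitions that fit in an $a\times b\times c$ box. In particular $|\det(U_m)|$ equals the number of plane partitions fitting in an $a\times b\times c$ box.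
   Context: A plane partition is a finite two-dimensional array of positive integers, weakly decreasing from left to right along rows and from top to bottom along columns. It fits in an $a\times b\times c$ box if it has at most $a$ rows, at most $b$ columns, and each entry is at most $c$. *)

theory Defs
  imports "Jordan_Normal_Form.Determinant" "HOL-Library.Product_Lexorder"
begin

text \<open>Monomials x^i y^j z^k of R = Z[x,y,z]/(x^(a+b), y^(a+c), z^(b+c)) are encoded
  by exponent triples (i,j,k).\<close>

type_synonym monom = "nat \<times> nat \<times> nat"

definition basis_B :: "nat \<Rightarrow> nat \<Rightarrow> nat \<Rightarrow> nat \<Rightarrow> monom set" where
  "basis_B a b c r = {(i,j,k). i < a + b \<and> j < a + c \<and> k < b + c \<and> i + j + k = r}"

definition step_monom :: "monom \<Rightarrow> monom \<Rightarrow> bool" where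
  "step_monom mu lam = (case lam of (i,j,k) \<Rightarrow>
      mu = (i+1,j,k) \<or> mu = (i,j+1,k) \<or> mu = (i,j,k+1))"

text \<open>Entry (mu, lambda) of multiplication by x+y+z: the coefficient of the
  basis monomial mu in (x+y+z)*lambda.\<close>
definition U_entry :: "monom \<Rightarrow> monom \<Rightarrow> int" where
  "U_entry mu lam = (if step_monom mu lam then 1 else 0)"

definition U_mat :: "nat \<Rightarrow> nat \<Rightarrow> nat \<Rightarrow> int mat" where
  "U_mat a b c =
     (let m = a + b + c - 2;
          rows = sorted_list_of_set (basis_B a b c (m+1));
          cols = sorted_list_of_set (basis_B a b c m)
      in mat (length rows) (length cols) (\<lambda>(p,q). U_entry (rows ! p) (cols ! q)))"

definition U_perm :: "nat \<Rightarrow> nat \<Rightarrow> nat \<Rightarrow> int" where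
  "U_perm a b c =
     (let m = a + b + c - 2 in
      \<Sum>phi \<in> {phi. bij_betw phi (basis_B a b c m) (basis_B a b c (m+1))
                    \<and> (\<forall>x. x \<notin> basis_B a b c m \<longrightarrow> phi x = undefined)}.
         \<Prod>lam \<in> basis_B a b c m. U_entry (phi lam) lam)"

text \<open>Plane partitions, as arrays padded with zeros (entry 0 = no cell).\<close>
definition plane_partition :: "(nat \<Rightarrow> nat \<Rightarrow> nat) \<Rightarrow> bool" where
  "plane_partition p =
     (finite {(i,j). p i j \<noteq> 0} \<and>
      (\<forall>i j. p (Suc i) j \<le> p i j) \<and> (\<forall>i j. p i (Suc j) \<le> p i j))"

definition fits_in_box :: "nat \<Rightarrow> nat \<Rightarrow> nat \<Rightarrow> (nat \<Rightarrow> nat \<Rightarrow> nat) \<Rightarrow> bool" where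
  "fits_in_box a b c p =
     ((\<forall>i j. p i j \<noteq> 0 \<longrightarrow> i < a \<and> j < b) \<and> (\<forall>i j. p i j \<le> c))"

definition box_PP :: "nat \<Rightarrow> nat \<Rightarrow> nat \<Rightarrow> (nat \<Rightarrow> nat \<Rightarrow> nat) set" where
  "box_PP a b c = {p. plane_partition p \<and> fits_in_box a b c p}"

end

theory Submission
  imports Defs
begin

definition gi :: "monom \<Rightarrow> nat" where "gi l = fst l"
definition gj :: "monom \<Rightarrow> nat" where "gj l = fst (snd l)"
definition gk :: "monom \<Rightarrow> nat" where "gk l = snd (snd l)"

lemma g_simps[simp]: "gi (i,j,k) = i" "gj (i,j,k) = j" "gk (i,j,k) = k"
  by (simp_all add: gi_def gj_def gk_def)

lemma step_monom_iff: "step_monom mu l \<longleftrightarrow>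
   mu = (gi l + 1, gj l, gk l) \<or> mu = (gi l, gj l + 1, gk l) \<or> mu = (gi l, gj l, gk l + 1)"
  by (cases l) (auto simp: step_monom_def)

lemma basis_B_iff: "l \<in> basis_B a b c r \<longleftrightarrow> gi l < a + b \<and> gj l < a + c \<and> gk l < b + c \<and> gi l + gj l + gk l = r"
  by (cases l) (auto simp: basis_B_def)

lemma finite_basis_B[simp]: "finite (basis_B a b c r)"
proof -
  have "basis_B a b c r \<subseteq> {..<a+b} \<times> {..<a+c} \<times> {..<b+c}"
    by (auto simp: basis_B_def)
  then show ?thesis by (rule finite_subset) auto
qed

locale box =
  fixes a b c :: nat
  assumes apos: "0 < a" and bpos: "0 < b" and cpos: "0 < c"
begin

definition "m = a + b + c - 2"
definition "Bm = basis_B a b c m"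
definition "Bn = basis_B a b c (m+1)"

lemma Bm_iff: "l \<in> Bm \<longleftrightarrow> gi l < a + b \<and> gj l < a + c \<and> gk l < b + c \<and> gi l + gj l + gk l = a + b + c - 2"
  unfolding Bm_def m_def basis_B_iff ..
lemma Bn_iff: "l \<in> Bn \<longleftrightarrow> gi l < a + b \<and> gj l < a + c \<and> gk l < b + c \<and> gi l + gj l + gk l = a + b + c - 1"
  unfolding Bn_def m_def basis_B_iff using apos bpos cpos by auto

lemma fin_Bm[simp]: "finite Bm" and fin_Bn[simp]: "finite Bn"
  by (simp_all add: Bm_def Bn_def)

definition flipm :: "monom \<Rightarrow> monom" where
  "flipm l = (a + b - 1 - gi l, a + c - 1 - gj l, b + c - 1 - gk l)"

lemma card_Bm_Bn: "card Bm = card Bn"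
proof -
  have "bij_betw flipm Bm Bn"
  proof (rule bij_betw_byWitness[where f' = flipm])
    show "\<forall>x\<in>Bm. flipm (flipm x) = x"
    proof
      fix x assume "x \<in> Bm"
      then show "flipm (flipm x) = x" unfolding Bm_iff flipm_def by (cases x) simp
    qed
    show "\<forall>x\<in>Bn. flipm (flipm x) = x"
    proof
      fix x assume "x \<in> Bn"
      then show "flipm (flipm x) = x" unfolding Bn_iff flipm_def by (cases x) simp
    qed
    show "flipm ` Bm \<subseteq> Bn"
    proof
      fix y assume "y \<in> flipm ` Bm"
      then obtain x where "x \<in> Bm" "y = flipm x" by blast
      then show "y \<in> Bn" using apos bpos cpos unfolding Bm_iff Bn_iff flipm_def by (cases x) simp
    qed
    show "flipm ` Bn \<subseteq> Bm"
    proof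
      fix y assume "y \<in> flipm ` Bn"
      then obtain x where "x \<in> Bn" "y = flipm x" by blast
      then show "y \<in> Bm" using apos bpos cpos unfolding Bm_iff Bn_iff flipm_def by (cases x) simp
    qed
  qed
  then show ?thesis by (rule bij_betw_same_card)
qed

definition xs :: "monom \<Rightarrow> monom" where "xs l = (gi l + 1, gj l, gk l)"
definition ys :: "monom \<Rightarrow> monom" where "ys l = (gi l, gj l + 1, gk l)"
definition zs :: "monom \<Rightarrow> monom" where "zs l = (gi l, gj l, gk l + 1)"

definition Mt where
  "Mt = {phi. bij_betw phi Bm Bn \<and> (\<forall>x. x \<notin> Bm \<longrightarrow> phi x = undefined)
          \<and> (\<forall>l \<in> Bm. step_monom (phi l) l)}"

definition Xof :: "(monom \<Rightarrow> monom) \<Rightarrow> monom set" where "Xof f = {l \<in> Bm. f l = xs l}"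

definition Nx :: "(monom \<Rightarrow> monom) \<Rightarrow> nat \<Rightarrow> nat \<Rightarrow> nat" where
  "Nx f i J = card {l \<in> Xof f. gi l = i \<and> J \<le> gj l}"

definition C :: "nat \<Rightarrow> monom set" where "C i = {l \<in> Bm. gi l = i}"
definition R :: "nat \<Rightarrow> monom set" where "R i = {l \<in> Bn. gi l = i}"

lemma fin_C[simp]: "finite (C i)" and fin_R[simp]: "finite (R i)"
  by (auto simp: C_def R_def)

end

locale matching = box +
  fixes phi :: "monom \<Rightarrow> monom"
  assumes phiM: "phi \<in> Mt"
begin

lemma bij: "bij_betw phi Bm Bn" using phiM by (simp add: Mt_def)
lemma inj: "inj_on phi Bm" using bij by (simp add: bij_betw_def)
lemma img: "phi ` Bm = Bn" using bij by (simp add: bij_betw_def)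
lemma mapsto: "l \<in> Bm \<Longrightarrow> phi l \<in> Bn" using img by auto
lemma step: "l \<in> Bm \<Longrightarrow> phi l = xs l \<or> phi l = ys l \<or> phi l = zs l"
  using phiM by (auto simp: Mt_def step_monom_iff xs_def ys_def zs_def)
lemma outside: "x \<notin> Bm \<Longrightarrow> phi x = undefined" using phiM[unfolded Mt_def] by blast

definition X where "X = {l \<in> Bm. phi l = xs l}"

lemma X_eq: "X = Xof phi" by (simp add: X_def Xof_def)

lemma X_sub: "X \<subseteq> Bm" by (auto simp: X_def)
lemma fin_X[simp]: "finite X" using X_sub fin_Bm finite_subset by blast

lemma preimage: "mu \<in> Bn \<Longrightarrow> \<exists>l\<in>Bm. phi l = mu" using img by (metis imageE)

lemma gi_phi: "l \<in> Bm \<Longrightarrow> gi (phi l) = (if l \<in> X then gi l + 1 else gi l)"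
  using step[of l] by (auto simp: X_def xs_def ys_def zs_def)

lemma R_decomp: "R i = phi ` (C i - X) \<union> phi ` {l \<in> X. gi l + 1 = i}"
proof
  show "R i \<subseteq> phi ` (C i - X) \<union> phi ` {l \<in> X. gi l + 1 = i}"
  proof
    fix mu assume "mu \<in> R i"
    then have mu: "mu \<in> Bn" "gi mu = i" by (auto simp: R_def)
    then obtain l where l: "l \<in> Bm" "phi l = mu" using preimage by blast
    show "mu \<in> phi ` (C i - X) \<union> phi ` {l \<in> X. gi l + 1 = i}"
      using gi_phi[OF l(1)] l mu X_sub by (cases "l \<in> X") (auto simp: C_def)
  qed
  show "phi ` (C i - X) \<union> phi ` {l \<in> X. gi l + 1 = i} \<subseteq> R i"
    using gi_phi mapsto X_sub by (auto simp: C_def R_def)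
qed

lemma card_R: "card (R i) = card (C i - X) + card {l \<in> X. gi l + 1 = i}"
proof -
  have d: "(C i - X) \<inter> {l \<in> X. gi l + 1 = i} = {}" by auto
  have s1: "(C i - X) \<union> {l \<in> X. gi l + 1 = i} \<subseteq> Bm" using X_sub by (auto simp: C_def)
  have f1: "finite (C i - X)" by simp
  have f2: "finite {l \<in> X. gi l + 1 = i}" by simp
  have "card (R i) = card (phi ` ((C i - X) \<union> {l \<in> X. gi l + 1 = i}))"
    using R_decomp by (simp add: image_Un)
  also have "\<dots> = card ((C i - X) \<union> {l \<in> X. gi l + 1 = i})"
    using inj_on_subset[OF inj s1] by (rule card_image)
  also have "\<dots> = card (C i - X) + card {l \<in> X. gi l + 1 = i}"
    using f1 f2 d by (rule card_Un_disjoint)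
  finally show ?thesis .
qed

definition sx :: "nat \<Rightarrow> nat" where "sx i = card {l \<in> X. gi l = i}"

lemma XC: "{l \<in> X. gi l = i} = X \<inter> C i" using X_sub by (auto simp: C_def)

lemma card_C: "card (C i) = card (C i - X) + sx i"
proof -
  have "C i = (C i - X) \<union> (X \<inter> C i)" by auto
  moreover have "card ((C i - X) \<union> (X \<inter> C i)) = card (C i - X) + card (X \<inter> C i)"
    by (rule card_Un_disjoint) auto
  ultimately have "card (C i) = card (C i - X) + card (X \<inter> C i)" by simp
  then show ?thesis by (simp add: sx_def XC)
qed

end

context box begin

fun sfun :: "nat \<Rightarrow> nat" where
  "sfun 0 = card (C 0) - card (R 0)"
| "sfun (Suc i) = card (C (Suc i)) + sfun i - card (R (Suc i))"

end

context matching begin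

lemma sx_sfun: "sx i = sfun i"
proof (induction i)
  case 0
  have "{l \<in> X. gi l + 1 = 0} = {}" by auto
  then have "card (R 0) = card (C 0 - X)" using card_R[of 0] by simp
  then show ?case using card_C[of 0] by simp
next
  case (Suc i)
  have "{l \<in> X. gi l + 1 = Suc i} = {l \<in> X. gi l = i}" by auto
  then have "card (R (Suc i)) = card (C (Suc i) - X) + sx i" using card_R[of "Suc i"] by (simp add: sx_def)
  then show ?case using card_C[of "Suc i"] Suc by simp
qed

lemma card_CX: "card (C i - X) = card (C i) - sfun i"
  using card_C[of i] sx_sfun[of i] by simp

end

context box begin

lemma Mt_matching: "f \<in> Mt \<Longrightarrow> matching a b c f"
  by (simp add: matching_def matching_axioms_def box_axioms)

lemma no_yz_disagree:
  assumes f: "f \<in> Mt" and g: "g \<in> Mt" and XX: "Xof f = Xof g"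
  shows "\<not> (\<exists>l\<in>Bm. f l = ys l \<and> g l = zs l)"
proof
  interpret F: matching a b c f by (rule Mt_matching[OF f])
  interpret G: matching a b c g by (rule Mt_matching[OF g])
  assume "\<exists>l\<in>Bm. f l = ys l \<and> g l = zs l"
  then have ne: "{l\<in>Bm. f l = ys l \<and> g l = zs l} \<noteq> {}" by blast
  let ?D = "{l\<in>Bm. f l = ys l \<and> g l = zs l}"
  have fin: "finite (gj ` ?D)" by simp
  obtain l where l: "l \<in> ?D" and lmax: "\<forall>l'\<in>?D. gj l' \<le> gj l"
  proof -
    have "Max (gj ` ?D) \<in> gj ` ?D" using fin ne by (intro Max_in) auto
    then obtain l where "l \<in> ?D" "gj l = Max (gj ` ?D)" by auto
    moreover have "\<forall>l'\<in>?D. gj l' \<le> Max (gj ` ?D)" using fin by auto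
    ultimately have "\<forall>l'\<in>?D. gj l' \<le> gj l" by simp
    with \<open>l \<in> ?D\<close> show ?thesis by (rule that)
  qed
  have lB: "l \<in> Bm" and fl: "f l = ys l" and gl: "g l = zs l" using l by auto
  have muB: "ys l \<in> Bn" using F.mapsto[OF lB] fl by simp
  obtain l' where l'B: "l' \<in> Bm" and gl': "g l' = ys l" using G.preimage[OF muB] by blast
  consider "g l' = xs l'" | "g l' = ys l'" | "g l' = zs l'" using G.step[OF l'B] by blast
  then show False
  proof cases
    case 1
    then have "l' \<in> Xof f" using XX l'B by (simp add: Xof_def)
    then have "f l' = xs l'" by (simp add: Xof_def)
    then have "f l' = f l" using 1 gl' fl by simp
    then have "l' = l" using F.inj lB l'B by (auto dest: inj_onD)
    then show False using 1 gl' by (simp add: xs_def ys_def)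
  next
    case 2
    then have "l' = l" using gl' by (cases l, cases l') (simp add: ys_def)
    then show False using 2 gl by (simp add: ys_def zs_def)
  next
    case 3
    then have l'eq: "zs l' = ys l" using gl' by simp
    then have neq: "l' \<noteq> l" by (cases l, cases l') (auto simp: ys_def zs_def)
    have "l' \<notin> Xof g" using 3 by (simp add: Xof_def xs_def zs_def)
    then have nx: "f l' \<noteq> xs l'" using XX l'B unfolding Xof_def by blast
    have nz: "f l' \<noteq> zs l'"
    proof
      assume "f l' = zs l'"
      then have "f l' = f l" using l'eq fl by simp
      then show False using F.inj lB l'B neq by (auto dest: inj_onD)
    qed
    then have "f l' = ys l'" using F.step[OF l'B] nx by blast
    then have "l' \<in> ?D" using 3 l'B by simp
    then have "gj l' \<le> gj l" using lmax by blast
    moreover have "gj l' = gj l + 1" using l'eq by (cases l, cases l') (simp add: ys_def zs_def)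
    ultimately show False by simp
  qed
qed

lemma X_determines:
  assumes f: "f \<in> Mt" and g: "g \<in> Mt" and XX: "Xof f = Xof g"
  shows "f = g"
proof
  interpret F: matching a b c f by (rule Mt_matching[OF f])
  interpret G: matching a b c g by (rule Mt_matching[OF g])
  fix l
  show "f l = g l"
  proof (cases "l \<in> Bm")
    case False then show ?thesis using F.outside G.outside by simp
  next
    case True
    have n1: "\<not> (f l = ys l \<and> g l = zs l)" using no_yz_disagree[OF f g XX] True by blast
    have n2: "\<not> (g l = ys l \<and> f l = zs l)" using no_yz_disagree[OF g f XX[symmetric]] True by blast
    have e: "f l = xs l \<longleftrightarrow> g l = xs l" using XX True unfolding Xof_def by blast
    have d1: "xs l \<noteq> ys l" "xs l \<noteq> zs l" "ys l \<noteq> zs l" by (simp_all add: xs_def ys_def zs_def)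
    show ?thesis using F.step[OF True] G.step[OF True] n1 n2 e d1 by fastforce
  qed
qed

lemma card_le1: "E \<subseteq> {x} \<Longrightarrow> card E \<le> 1"
  using card_mono[of "{x}" E] by simp

lemma card_Rge_le: "card {mu \<in> R i. J \<le> gj mu} \<le> card {l \<in> C i. J \<le> gj l} + (if b \<le> i then 1 else 0)"
proof -
  let ?Rg = "{mu \<in> R i. J \<le> gj mu}" and ?Cg = "{l \<in> C i. J \<le> gj l}"
  let ?E = "{mu \<in> ?Rg. gk mu = 0}"
  let ?h = "\<lambda>mu::monom. (gi mu, gj mu, gk mu - 1)"
  have "inj_on ?h (?Rg - ?E)"
  proof (rule inj_onI)
    fix x y assume "x \<in> ?Rg - ?E" "y \<in> ?Rg - ?E" "?h x = ?h y"
    then show "x = y" by (cases x, cases y) auto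
  qed
  moreover have "?h ` (?Rg - ?E) \<subseteq> ?Cg"
  proof
    fix z assume "z \<in> ?h ` (?Rg - ?E)"
    then obtain x where x: "x \<in> ?Rg - ?E" "z = ?h x" by blast
    then show "z \<in> ?Cg" by (cases x) (auto simp: R_def C_def Bn_iff Bm_iff)
  qed
  ultimately have c1: "card (?Rg - ?E) \<le> card ?Cg"
    by (intro card_inj_on_le) auto
  have c2: "card ?E \<le> (if b \<le> i then 1 else 0)"
  proof (cases "b \<le> i")
    case True
    have "?E \<subseteq> {(i, a + b + c - 1 - i, 0)}"
    proof
      fix x assume "x \<in> ?E"
      then show "x \<in> {(i, a + b + c - 1 - i, 0)}" by (cases x) (auto simp: R_def Bn_iff)
    qed
    then have "card ?E \<le> 1" by (rule card_le1)
    then show ?thesis using True by (simp only: True if_True)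
  next
    case False
    have "?E = {}"
    proof (rule ccontr)
      assume "?E \<noteq> {}"
      then obtain x where "x \<in> ?E" by blast
      then show False using False by (cases x) (auto simp: R_def Bn_iff)
    qed
    then have e0: "card ?E = 0" by (simp only: card.empty)
    show ?thesis unfolding e0 by simp
  qed
  have "card ?Rg \<le> card ((?Rg - ?E) \<union> ?E)" by (intro card_mono) auto
  also have "\<dots> \<le> card (?Rg - ?E) + card ?E" by (rule card_Un_le)
  finally have "card ?Rg \<le> card (?Rg - ?E) + card ?E" .
  then show ?thesis using c1 c2 by linarith
qed

lemma card_Cge_le: "card {l \<in> C (Suc i). J \<le> gj l} \<le> card {mu \<in> R (Suc i). Suc J \<le> gj mu} + (if Suc i < b then 1 else 0)"
proof -
  let ?Rg = "{mu \<in> R (Suc i). Suc J \<le> gj mu}" and ?Cg = "{l \<in> C (Suc i). J \<le> gj l}"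
  let ?E = "{l \<in> ?Cg. gj l = a + c - 1}"
  have "inj_on ys (?Cg - ?E)"
  proof (rule inj_onI)
    fix x y assume "x \<in> ?Cg - ?E" "y \<in> ?Cg - ?E" "ys x = ys y"
    then show "x = y" by (cases x, cases y) (auto simp: ys_def)
  qed
  moreover have "ys ` (?Cg - ?E) \<subseteq> ?Rg"
  proof
    fix z assume "z \<in> ys ` (?Cg - ?E)"
    then obtain x where x: "x \<in> ?Cg - ?E" "z = ys x" by blast
    then show "z \<in> ?Rg" by (cases x) (auto simp: R_def C_def Bn_iff Bm_iff ys_def)
  qed
  ultimately have c1: "card (?Cg - ?E) \<le> card ?Rg"
    by (intro card_inj_on_le) auto
  have c2: "card ?E \<le> (if Suc i < b then 1 else 0)"
  proof (cases "Suc i < b")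
    case True
    have "?E \<subseteq> {(Suc i, a + c - 1, b - 2 - i)}"
    proof
      fix x assume "x \<in> ?E"
      then show "x \<in> {(Suc i, a + c - 1, b - 2 - i)}" using True by (cases x) (auto simp: C_def Bm_iff)
    qed
    then have "card ?E \<le> 1" by (rule card_le1)
    then show ?thesis using True by (simp only: True if_True)
  next
    case False
    have "?E = {}"
    proof (rule ccontr)
      assume "?E \<noteq> {}"
      then obtain x where "x \<in> ?E" by blast
      then show False using False by (cases x) (auto simp: C_def Bm_iff)
    qed
    then have e0: "card ?E = 0" by (simp only: card.empty)
    show ?thesis unfolding e0 by simp
  qed
  have "card ?Cg \<le> card ((?Cg - ?E) \<union> ?E)" by (intro card_mono) auto
  also have "\<dots> \<le> card (?Cg - ?E) + card ?E" by (rule card_Un_le)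
  finally have "card ?Cg \<le> card (?Cg - ?E) + card ?E" .
  then show ?thesis using c1 c2 by linarith
qed

end

context matching begin

abbreviation N where "N \<equiv> Nx phi"

lemma N_eq: "N i J = card (X \<inter> {l \<in> C i. J \<le> gj l})"
  unfolding Nx_def X_eq[symmetric] using X_sub by (intro arg_cong[where f=card]) (auto simp: C_def)

lemma ineq2:
  assumes "1 \<le> i"
  shows "N (i - 1) J \<le> N i J + (if b \<le> i then 1 else 0)"
proof -
  let ?Rg = "{mu \<in> R i. J \<le> gj mu}" and ?Cg = "{l \<in> C i. J \<le> gj l}"
  let ?A = "?Cg - X" and ?B = "{l \<in> X. gi l = i - 1 \<and> J \<le> gj l}"
  have AB: "?A \<inter> ?B = {}" using assms by (auto simp: C_def)
  have sub: "?A \<union> ?B \<subseteq> Bm" using X_sub by (auto simp: C_def)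
  have "phi ` (?A \<union> ?B) \<subseteq> ?Rg"
  proof
    fix mu assume "mu \<in> phi ` (?A \<union> ?B)"
    then obtain l where l: "l \<in> ?A \<union> ?B" "mu = phi l" by blast
    have lB: "l \<in> Bm" using l sub by blast
    show "mu \<in> ?Rg"
    proof (cases "l \<in> X")
      case True
      then have "mu = xs l" using l by (simp add: X_def)
      then show ?thesis using l mapsto[OF lB] True assms by (auto simp: R_def C_def xs_def)
    next
      case False
      then have "mu = ys l \<or> mu = zs l" using step[OF lB] l lB by (auto simp: X_def)
      then show ?thesis using l mapsto[OF lB] False by (auto simp: R_def C_def ys_def zs_def)
    qed
  qed
  then have "card (phi ` (?A \<union> ?B)) \<le> card ?Rg" by (intro card_mono) auto
  moreover have "card (phi ` (?A \<union> ?B)) = card ?A + card ?B"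
  proof -
    have "card (phi ` (?A \<union> ?B)) = card (?A \<union> ?B)"
      using inj_on_subset[OF inj sub] by (rule card_image)
    also have "\<dots> = card ?A + card ?B" by (rule card_Un_disjoint) (use AB in auto)
    finally show ?thesis .
  qed
  moreover have "card ?B = N (i - 1) J" unfolding Nx_def X_eq by simp
  moreover have "card ?A = card ?Cg - N i J"
  proof -
    have "card ?A = card ?Cg - card (?Cg \<inter> X)" by (simp add: card_Diff_subset_Int)
    then show ?thesis by (simp add: N_eq Int_commute)
  qed
  moreover have "N i J \<le> card ?Cg" unfolding N_eq by (intro card_mono) auto
  ultimately show ?thesis using card_Rge_le[of i J] by linarith
qed

lemma ineq1:
  shows "N (Suc i) J \<le> N i (Suc J) + (if Suc i < b then 1 else 0)"
proof -
  let ?Rg = "{mu \<in> R (Suc i). Suc J \<le> gj mu}" and ?Cg = "{l \<in> C (Suc i). J \<le> gj l}"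
  let ?A = "?Cg - X" and ?B = "{l \<in> X. gi l = i \<and> Suc J \<le> gj l}"
  have sub: "?A \<union> ?B \<subseteq> Bm" using X_sub by (auto simp: C_def)
  have "?Rg \<subseteq> phi ` (?A \<union> ?B)"
  proof
    fix mu assume mu: "mu \<in> ?Rg"
    then have muB: "mu \<in> Bn" by (simp add: R_def)
    obtain l where lB: "l \<in> Bm" and pl: "phi l = mu" using preimage[OF muB] by blast
    have "l \<in> ?A \<union> ?B"
    proof (cases "l \<in> X")
      case True
      then have "mu = xs l" using pl by (simp add: X_def)
      then show ?thesis using mu True by (auto simp: R_def xs_def)
    next
      case False
      then have "mu = ys l \<or> mu = zs l" using step[OF lB] pl lB by (auto simp: X_def)
      then show ?thesis using mu False lB by (auto simp: R_def C_def ys_def zs_def)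
    qed
    then show "mu \<in> phi ` (?A \<union> ?B)" using pl by blast
  qed
  then have "card ?Rg \<le> card (phi ` (?A \<union> ?B))" by (intro card_mono) auto
  also have "\<dots> \<le> card (?A \<union> ?B)" by (rule card_image_le) auto
  also have "\<dots> \<le> card ?A + card ?B" by (rule card_Un_le)
  finally have c: "card ?Rg \<le> card ?A + card ?B" .
  moreover have "card ?B = N i (Suc J)" unfolding Nx_def X_eq by simp
  moreover have "card ?A = card ?Cg - N (Suc i) J"
  proof -
    have "card ?A = card ?Cg - card (?Cg \<inter> X)" by (simp add: card_Diff_subset_Int)
    then show ?thesis by (simp add: N_eq Int_commute)
  qed
  moreover have "N (Suc i) J \<le> card ?Cg" unfolding N_eq by (intro card_mono) auto
  ultimately show ?thesis using card_Cge_le[of i J] by linarith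
qed

end

context box begin

definition cubeJ :: "(monom \<Rightarrow> monom) \<Rightarrow> nat \<Rightarrow> nat \<Rightarrow> nat \<Rightarrow> bool" where
  "cubeJ f u v J \<longleftrightarrow> min u v + 1 \<le> Nx f (b - 1 + u - v) J"

definition Ffun :: "(monom \<Rightarrow> monom) \<Rightarrow> nat \<Rightarrow> nat \<Rightarrow> nat" where
  "Ffun f = (\<lambda>u v. if u < a \<and> v < b then card {w. w < c \<and> cubeJ f u v (a - u + w)} else 0)"

lemma Nx_mono: "J \<le> J' \<Longrightarrow> Nx f i J' \<le> Nx f i J"
  unfolding Nx_def by (rule card_mono) (auto simp: Xof_def)

lemma cubeJ_mono: "J \<le> J' \<Longrightarrow> cubeJ f u v J' \<Longrightarrow> cubeJ f u v J"
  unfolding cubeJ_def using Nx_mono by (meson le_trans)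

lemma Ffun_le: "Ffun f u v \<le> c"
proof -
  have "card {w. w < c \<and> P w} \<le> c" for P using card_mono[of "{..<c}" "{w. w < c \<and> P w}"] by auto
  then show ?thesis unfolding Ffun_def by simp
qed

end

context matching begin

lemma cube_I1:
  assumes "Suc u < a" "v < b" "cubeJ phi (Suc u) v J"
  shows "cubeJ phi u v (Suc J)"
proof -
  define i where "i = b - 1 + u - v"
  have bi: "b - 1 + Suc u - v = Suc i" using assms bpos by (simp add: i_def)
  have c1: "min (Suc u) v + 1 \<le> N (Suc i) J" using assms(3) bi by (simp add: cubeJ_def)
  have "N (Suc i) J \<le> N i (Suc J) + (if Suc i < b then 1 else 0)" by (rule ineq1)
  moreover have "Suc i < b \<longleftrightarrow> u < v" using assms bpos unfolding i_def by arith
  ultimately have "min u v + 1 \<le> N i (Suc J)" using c1 by (auto split: if_splits)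
  then show ?thesis by (simp add: cubeJ_def i_def)
qed

lemma cube_I2:
  assumes "u < a" "Suc v < b" "cubeJ phi u (Suc v) J"
  shows "cubeJ phi u v J"
proof -
  define i where "i = b - 1 + u - v"
  have i1: "1 \<le> i" using assms by (simp add: i_def)
  have bi: "b - 1 + u - Suc v = i - 1" using assms bpos by (simp add: i_def)
  have c1: "min u (Suc v) + 1 \<le> N (i - 1) J" using assms(3) bi by (simp add: cubeJ_def)
  have "N (i - 1) J \<le> N i J + (if b \<le> i then 1 else 0)" by (rule ineq2[OF i1])
  moreover have "b \<le> i \<longleftrightarrow> v < u" using assms bpos unfolding i_def by arith
  ultimately have "min u v + 1 \<le> N i J" using c1 by (auto split: if_splits)
  then show ?thesis by (simp add: cubeJ_def i_def)
qed

lemma F_in_PP: "Ffun phi \<in> box_PP a b c"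
proof -
  let ?p = "Ffun phi"
  have fin: "finite {(i, j). ?p i j \<noteq> 0}"
  proof (rule finite_subset)
    show "{(i, j). ?p i j \<noteq> 0} \<subseteq> {..<a} \<times> {..<b}" by (auto simp: Ffun_def split: if_splits)
  qed auto
  have m1: "?p (Suc i) j \<le> ?p i j" for i j
  proof (cases "Suc i < a \<and> j < b")
    case True
    have "{w. w < c \<and> cubeJ phi (Suc i) j (a - Suc i + w)} \<subseteq> {w. w < c \<and> cubeJ phi i j (a - i + w)}"
    proof
      fix w assume "w \<in> {w. w < c \<and> cubeJ phi (Suc i) j (a - Suc i + w)}"
      then have "w < c" "cubeJ phi (Suc i) j (a - Suc i + w)" by auto
      then have cc: "cubeJ phi i j (Suc (a - Suc i + w))" using cube_I1 True by blast
      have e: "Suc (a - Suc i + w) = a - i + w" using True by arith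
      have "cubeJ phi i j (a - i + w)" using cc unfolding e .
      then show "w \<in> {w. w < c \<and> cubeJ phi i j (a - i + w)}" using \<open>w < c\<close> by blast
    qed
    then have "card {w. w < c \<and> cubeJ phi (Suc i) j (a - Suc i + w)} \<le> card {w. w < c \<and> cubeJ phi i j (a - i + w)}"
      by (rule card_mono[rotated]) auto
    then show ?thesis using True by (simp add: Ffun_def)
  next
    case False
    then show ?thesis by (simp add: Ffun_def)
  qed
  have m2: "?p i (Suc j) \<le> ?p i j" for i j
  proof (cases "i < a \<and> Suc j < b")
    case True
    have "{w. w < c \<and> cubeJ phi i (Suc j) (a - i + w)} \<subseteq> {w. w < c \<and> cubeJ phi i j (a - i + w)}"
      using cube_I2 True by blast
    then have "card {w. w < c \<and> cubeJ phi i (Suc j) (a - i + w)} \<le> card {w. w < c \<and> cubeJ phi i j (a - i + w)}"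
      by (rule card_mono[rotated]) auto
    then show ?thesis using True by (simp add: Ffun_def)
  next
    case False
    then show ?thesis by (simp add: Ffun_def)
  qed
  have "plane_partition ?p" unfolding plane_partition_def using fin m1 m2 by blast
  moreover have "fits_in_box a b c ?p" unfolding fits_in_box_def
    using Ffun_le by (auto simp: Ffun_def split: if_splits)
  ultimately show ?thesis by (simp add: box_PP_def)
qed

end

lemma downset_eq:
  assumes fin: "finite (S::nat set)" and dc: "\<And>x y. x \<in> S \<Longrightarrow> y \<le> x \<Longrightarrow> y \<in> S"
  shows "S = {..<card S}"
proof -
  have "S \<subseteq> {..<card S}"
  proof
    fix x assume x: "x \<in> S"
    have "{..x} \<subseteq> S" using dc x by auto
    then have "card {..x} \<le> card S" using fin by (rule card_mono[rotated])
    then show "x \<in> {..<card S}" by simp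
  qed
  moreover have "card S = card {..<card S}" by simp
  ultimately show ?thesis by (metis card_subset_eq finite_lessThan)
qed

locale ppbox = box +
  fixes p :: "nat \<Rightarrow> nat \<Rightarrow> nat"
  assumes ppin: "p \<in> box_PP a b c"
begin

lemma p_le: "p u v \<le> c" using ppin by (simp add: box_PP_def fits_in_box_def)
lemma p_out: "\<not> (u < a \<and> v < b) \<Longrightarrow> p u v = 0"
  using ppin by (auto simp: box_PP_def fits_in_box_def)
lemma mono_u: "u \<le> u' \<Longrightarrow> p u' v \<le> p u v"
proof -
  assume "u \<le> u'"
  have "\<And>n. p (Suc n) v \<le> p n v" using ppin by (simp add: box_PP_def plane_partition_def)
  then show ?thesis using lift_Suc_antimono_le[of "\<lambda>n. p n v"] \<open>u \<le> u'\<close> by blast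
qed
lemma mono_v: "v \<le> v' \<Longrightarrow> p u v' \<le> p u v"
proof -
  assume "v \<le> v'"
  have "\<And>n. p u (Suc n) \<le> p u n" using ppin by (simp add: box_PP_def plane_partition_def)
  then show ?thesis using lift_Suc_antimono_le[of "\<lambda>n. p u n"] \<open>v \<le> v'\<close> by blast
qed

definition q1 :: "nat \<Rightarrow> nat \<Rightarrow> nat" where "q1 v w = card {u. u < a \<and> w < p u v}"
definition q2 :: "nat \<Rightarrow> nat \<Rightarrow> nat" where "q2 u w = card {v. v < b \<and> w < p u v}"

lemma q1_set: "{u. u < a \<and> w < p u v} = {..<q1 v w}"
  unfolding q1_def
  by (rule downset_eq) (auto intro: less_le_trans[OF _ mono_u])
lemma q2_set: "{v. v < b \<and> w < p u v} = {..<q2 u w}"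
  unfolding q2_def
  by (rule downset_eq) (auto intro: less_le_trans[OF _ mono_v])

lemma q1_iff: "u < q1 v w \<longleftrightarrow> u < a \<and> w < p u v"
  using q1_set[of w v] by (metis (no_types, lifting) lessThan_iff mem_Collect_eq)
lemma q2_iff: "v < q2 u w \<longleftrightarrow> v < b \<and> w < p u v"
  using q2_set[of w u] by (metis (no_types, lifting) lessThan_iff mem_Collect_eq)

lemma q1_le: "q1 v w \<le> a"
proof -
  have "card {u. u < a \<and> w < p u v} \<le> card {..<a}" by (rule card_mono) auto
  then show ?thesis by (simp add: q1_def)
qed
lemma q2_le: "q2 u w \<le> b"
proof -
  have "card {v. v < b \<and> w < p u v} \<le> card {..<b}" by (rule card_mono) auto
  then show ?thesis by (simp add: q2_def)
qed

lemma q1_anti: "v \<le> v' \<Longrightarrow> w \<le> w' \<Longrightarrow> q1 v' w' \<le> q1 v w"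
  unfolding q1_def by (rule card_mono) (auto, meson le_less_trans less_le_trans mono_v)
lemma q2_anti: "u \<le> u' \<Longrightarrow> w \<le> w' \<Longrightarrow> q2 u' w' \<le> q2 u w"
  unfolding q2_def by (rule card_mono) (auto, meson le_less_trans less_le_trans mono_u)

definition xp :: "nat \<Rightarrow> nat \<Rightarrow> monom" where
  "xp u v = (b - 1 + u - v, a - 1 - u + p u v, c + v - p u v)"
definition zp :: "nat \<Rightarrow> nat \<Rightarrow> monom" where
  "zp v w = (b - 1 + q1 v w - v, a - q1 v w + w, c - 1 + v - w)"
definition yp :: "nat \<Rightarrow> nat \<Rightarrow> monom" where
  "yp u w = (b + u - q2 u w, a - 1 - u + w, c - 1 + q2 u w - w)"

lemma xp_in: assumes "u < a" "v < b" shows "xp u v \<in> Bm" "xs (xp u v) \<in> Bn"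
  using assms p_le[of u v] apos bpos cpos by (auto simp: xp_def xs_def Bm_iff Bn_iff)

lemma zp_in: assumes "v < b" "w < c" shows "zp v w \<in> Bm" "zs (zp v w) \<in> Bn"
  using assms q1_le[of v w] apos bpos cpos by (auto simp: zp_def zs_def Bm_iff Bn_iff)

lemma yp_in: assumes "u < a" "w < c" shows "yp u w \<in> Bm" "ys (yp u w) \<in> Bn"
  using assms q2_le[of u w] apos bpos cpos by (auto simp: yp_def ys_def Bm_iff Bn_iff)


lemma xz_disj:
  assumes "u < a" "v < b" "v' < b" "w < c"
  shows "xp u v \<noteq> zp v' w"
proof
  assume eq: "xp u v = zp v' w"
  define q where "q = q1 v' w"
  have ql: "q \<le> a" using q1_le by (simp add: q_def)
  have e: "b - 1 + u - v = b - 1 + q - v' \<and> a - 1 - u + p u v = a - q + w"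
    using eq unfolding xp_def zp_def prod.inject q_def by blast
  have r1: "u + v' = q + v" using e assms bpos by arith
  have r2: "p u v + q = w + u + 1" using e assms ql by arith
  show False
  proof (cases "u < q")
    case True
    then have w1: "w < p u v'" using q1_iff assms unfolding q_def by blast
    have "v \<le> v'" using r1 True by arith
    then have "p u v' \<le> p u v" by (rule mono_v)
    then show False using w1 r2 True by arith
  next
    case False
    then have w1: "\<not> w < p u v'" using q1_iff assms unfolding q_def by blast
    have "v' \<le> v" using r1 False by arith
    then have "p u v \<le> p u v'" by (rule mono_v)
    then show False using w1 r2 False by arith
  qed
qed

lemma xy_disj:
  assumes "u < a" "v < b" "u' < a" "w < c"
  shows "xp u v \<noteq> yp u' w"
proof
  assume eq: "xp u v = yp u' w"
  define q where "q = q2 u' w"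
  have ql: "q \<le> b" using q2_le by (simp add: q_def)
  have e: "b - 1 + u - v = b + u' - q \<and> a - 1 - u + p u v = a - 1 - u' + w"
    using eq unfolding xp_def yp_def prod.inject q_def by blast
  have r1: "u + q = u' + v + 1" using e assms bpos ql by arith
  have r2: "p u v + u' = w + u" using e assms by arith
  show False
  proof (cases "v < q")
    case True
    then have w1: "w < p u' v" using q2_iff assms unfolding q_def by blast
    have "u \<le> u'" using r1 True by arith
    then have "p u' v \<le> p u v" by (rule mono_u)
    then show False using w1 r2 \<open>u \<le> u'\<close> by arith
  next
    case False
    then have w1: "\<not> w < p u' v" using q2_iff assms unfolding q_def by blast
    have "u' < u" using r1 False by arith
    then have "p u v \<le> p u' v" by (intro mono_u) simp
    then show False using w1 r2 \<open>u' < u\<close> by arith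
  qed
qed

lemma yz_disj:
  assumes "u < a" "w < c" "v < b" "w' < c"
  shows "yp u w \<noteq> zp v w'"
proof
  assume eq: "yp u w = zp v w'"
  define q where "q = q2 u w"
  define r where "r = q1 v w'"
  have ql: "q \<le> b" using q2_le by (simp add: q_def)
  have rl: "r \<le> a" using q1_le by (simp add: r_def)
  have e: "b + u - q = b - 1 + r - v \<and> a - 1 - u + w = a - r + w'"
    using eq unfolding yp_def zp_def prod.inject q_def r_def by blast
  have r1: "u + v + 1 = r + q" using e assms bpos ql by arith
  have r2: "w + r = u + 1 + w'" using e assms rl by arith
  show False
  proof (cases "u < r")
    case True
    then have w1: "w' < p u v" using q1_iff assms unfolding r_def by blast
    have "\<not> v < q" using r1 True by arith
    then have "\<not> w < p u v" using q2_iff assms unfolding q_def by blast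
    then show False using w1 r2 True by arith
  next
    case False
    then have w1: "\<not> w' < p u v" using q1_iff assms unfolding r_def by blast
    have "v < q" using r1 False by arith
    then have "w < p u v" using q2_iff assms unfolding q_def by blast
    then show False using w1 r2 False by arith
  qed
qed

lemma xzi_disj:
  assumes "u < a" "v < b" "v' < b" "w < c"
  shows "xs (xp u v) \<noteq> zs (zp v' w)"
proof
  assume eq: "xs (xp u v) = zs (zp v' w)"
  define q where "q = q1 v' w"
  have ql: "q \<le> a" using q1_le by (simp add: q_def)
  have e: "b - 1 + u - v + 1 = b - 1 + q - v' \<and> a - 1 - u + p u v = a - q + w"
    using eq unfolding xp_def zp_def xs_def zs_def g_simps prod.inject q_def by blast
  have r1: "u + v' + 1 = q + v" using e assms bpos by arith
  have r2: "p u v + q = w + u + 1" using e assms ql by arith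
  show False
  proof (cases "u < q")
    case True
    then have w1: "w < p u v'" using q1_iff assms unfolding q_def by blast
    have "v \<le> v'" using r1 True by arith
    then have "p u v' \<le> p u v" by (rule mono_v)
    then show False using w1 r2 True by arith
  next
    case False
    then have w1: "\<not> w < p u v'" using q1_iff assms unfolding q_def by blast
    have "v' \<le> v" using r1 False by arith
    then have "p u v \<le> p u v'" by (rule mono_v)
    then show False using w1 r2 False by arith
  qed
qed

lemma xyi_disj:
  assumes "u < a" "v < b" "u' < a" "w < c"
  shows "xs (xp u v) \<noteq> ys (yp u' w)"
proof
  assume eq: "xs (xp u v) = ys (yp u' w)"
  define q where "q = q2 u' w"
  have ql: "q \<le> b" using q2_le by (simp add: q_def)
  have e: "b - 1 + u - v + 1 = b + u' - q \<and> a - 1 - u + p u v = a - 1 - u' + w + 1"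
    using eq unfolding xp_def yp_def xs_def ys_def g_simps prod.inject q_def by blast
  have r1: "u + q = u' + v" using e assms bpos ql by arith
  have r2: "p u v + u' = w + u + 1" using e assms by arith
  show False
  proof (cases "v < q")
    case True
    then have w1: "w < p u' v" using q2_iff assms unfolding q_def by blast
    have "u \<le> u'" using r1 True by arith
    then have "p u' v \<le> p u v" by (rule mono_u)
    then show False using w1 r2 True r1 by arith
  next
    case False
    then have w1: "\<not> w < p u' v" using q2_iff assms unfolding q_def by blast
    have "u' \<le> u" using r1 False by arith
    then have "p u v \<le> p u' v" by (rule mono_u)
    then show False using w1 r2 \<open>u' \<le> u\<close> by arith
  qed
qed

lemma yzi_disj:
  assumes "u < a" "w < c" "v < b" "w' < c"
  shows "ys (yp u w) \<noteq> zs (zp v w')"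
proof
  assume eq: "ys (yp u w) = zs (zp v w')"
  define q where "q = q2 u w"
  define r where "r = q1 v w'"
  have ql: "q \<le> b" using q2_le by (simp add: q_def)
  have rl: "r \<le> a" using q1_le by (simp add: r_def)
  have e: "b + u - q = b - 1 + r - v \<and> a - 1 - u + w + 1 = a - r + w'"
    using eq unfolding yp_def zp_def ys_def zs_def g_simps prod.inject q_def r_def by blast
  have r1: "u + v + 1 = r + q" using e assms bpos ql by arith
  have r2: "w + r = u + w'" using e assms rl by arith
  show False
  proof (cases "u < r")
    case True
    then have w1: "w' < p u v" using q1_iff assms unfolding r_def by blast
    have "\<not> v < q" using r1 True by arith
    then have "\<not> w < p u v" using q2_iff assms unfolding q_def by blast
    then show False using w1 r2 True by arith
  next
    case False
    then have w1: "\<not> w' < p u v" using q1_iff assms unfolding r_def by blast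
    have "v < q" using r1 False by arith
    then have "w < p u v" using q2_iff assms unfolding q_def by blast
    then show False using w1 r2 False by arith
  qed
qed

lemma xp_inj:
  assumes "u < a" "v < b" "u' < a" "v' < b" "xp u v = xp u' v'"
  shows "u = u' \<and> v = v'"
proof -
  have e: "b - 1 + u - v = b - 1 + u' - v' \<and> a - 1 - u + p u v = a - 1 - u' + p u' v'"
    using assms(5) unfolding xp_def prod.inject by blast
  have r1: "u + v' = u' + v" using e assms bpos by arith
  have r2: "p u v + u' = p u' v' + u" using e assms by arith
  have "\<not> u < u'"
  proof
    assume "u < u'"
    then have "v \<le> v'" "u \<le> u'" using r1 by arith+
    then have "p u' v' \<le> p u v" using mono_u mono_v le_trans by blast
    then show False using r2 \<open>u < u'\<close> by arith
  qed
  moreover have "\<not> u' < u"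
  proof
    assume "u' < u"
    then have "v' \<le> v" "u' \<le> u" using r1 by arith+
    then have "p u v \<le> p u' v'" using mono_u mono_v le_trans by blast
    then show False using r2 \<open>u' < u\<close> by arith
  qed
  ultimately show ?thesis using r1 by arith
qed

lemma zp_inj:
  assumes "v < b" "w < c" "v' < b" "w' < c" "zp v w = zp v' w'"
  shows "v = v' \<and> w = w'"
proof -
  have e: "b - 1 + q1 v w - v = b - 1 + q1 v' w' - v' \<and> c - 1 + v - w = c - 1 + v' - w'"
    using assms(5) unfolding zp_def prod.inject by blast
  have r1: "q1 v w + v' = q1 v' w' + v" using e assms bpos by arith
  have r3: "v + w' = v' + w" using e assms cpos by arith
  have "\<not> v < v'"
  proof
    assume "v < v'"
    then have "w \<le> w'" "v \<le> v'" using r3 by arith+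
    then have "q1 v' w' \<le> q1 v w" by (simp add: q1_anti)
    then show False using r1 \<open>v < v'\<close> by arith
  qed
  moreover have "\<not> v' < v"
  proof
    assume "v' < v"
    then have "w' \<le> w" "v' \<le> v" using r3 by arith+
    then have "q1 v w \<le> q1 v' w'" by (simp add: q1_anti)
    then show False using r1 \<open>v' < v\<close> by arith
  qed
  ultimately show ?thesis using r3 by arith
qed

lemma yp_inj:
  assumes "u < a" "w < c" "u' < a" "w' < c" "yp u w = yp u' w'"
  shows "u = u' \<and> w = w'"
proof -
  have e: "b + u - q2 u w = b + u' - q2 u' w' \<and> a - 1 - u + w = a - 1 - u' + w'"
    using assms(5) unfolding yp_def prod.inject by blast
  have ql: "q2 u w \<le> b" "q2 u' w' \<le> b" using q2_le by auto
  have r1: "u + q2 u' w' = u' + q2 u w" using e assms ql by arith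
  have r2: "w + u' = w' + u" using e assms by arith
  have "\<not> u < u'"
  proof
    assume "u < u'"
    then have "w \<le> w'" "u \<le> u'" using r2 by arith+
    then have "q2 u' w' \<le> q2 u w" by (simp add: q2_anti)
    then show False using r1 \<open>u < u'\<close> by arith
  qed
  moreover have "\<not> u' < u"
  proof
    assume "u' < u"
    then have "w' \<le> w" "u' \<le> u" using r2 by arith+
    then have "q2 u w \<le> q2 u' w'" by (simp add: q2_anti)
    then show False using r1 \<open>u' < u\<close> by arith
  qed
  ultimately show ?thesis using r2 by arith
qed

end

context box begin

lemma card_Bm_le: "card Bm \<le> a * b + a * c + b * c"
proof -
  let ?X0 = "(\<lambda>(u,v). (b - 1 + u - v, a - 1 - u, c + v)) ` ({..<a} \<times> {..<b})"
  let ?Y0 = "(\<lambda>(u,w). (b + u, a - 1 - u + w, c - 1 - w)) ` ({..<a} \<times> {..<c})"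
  let ?Z0 = "(\<lambda>(v,w). (b - 1 - v, a + w, c - 1 + v - w)) ` ({..<b} \<times> {..<c})"
  have "Bm \<subseteq> ?X0 \<union> ?Y0 \<union> ?Z0"
  proof
    fix l assume lB: "l \<in> Bm"
    obtain i j k where l: "l = (i, j, k)" by (cases l)
    have h: "i < a + b" "j < a + c" "k < b + c" "i + j + k = a + b + c - 2"
      using lB l by (auto simp: Bm_iff)
    show "l \<in> ?X0 \<union> ?Y0 \<union> ?Z0"
    proof (cases "a \<le> j")
      case True
      show ?thesis
      proof (cases "i < b")
        case True
        have "l = (\<lambda>(v,w). (b - 1 - v, a + w, c - 1 + v - w)) (b - 1 - i, j - a)"
          using h True \<open>a \<le> j\<close> l by auto
        moreover have "(b - 1 - i, j - a) \<in> {..<b} \<times> {..<c}" using h True \<open>a \<le> j\<close> by auto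
        ultimately show ?thesis by blast
      next
        case False
        have "l = (\<lambda>(u,w). (b + u, a - 1 - u + w, c - 1 - w)) (i - b, c - 1 - k)"
          using h False \<open>a \<le> j\<close> l by auto
        moreover have "(i - b, c - 1 - k) \<in> {..<a} \<times> {..<c}" using h False \<open>a \<le> j\<close> cpos by auto
        ultimately show ?thesis by blast
      qed
    next
      case False
      show ?thesis
      proof (cases "c \<le> k")
        case True
        have "l = (\<lambda>(u,v). (b - 1 + u - v, a - 1 - u, c + v)) (a - 1 - j, k - c)"
          using h True False l by auto
        moreover have "(a - 1 - j, k - c) \<in> {..<a} \<times> {..<b}" using h True False by auto
        ultimately show ?thesis by blast
      next
        case kc: False
        have "l = (\<lambda>(u,w). (b + u, a - 1 - u + w, c - 1 - w)) (i - b, c - 1 - k)"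
          using h kc False l by auto
        moreover have "(i - b, c - 1 - k) \<in> {..<a} \<times> {..<c}" using h kc False cpos by auto
        ultimately show ?thesis by blast
      qed
    qed
  qed
  then have "card Bm \<le> card (?X0 \<union> ?Y0 \<union> ?Z0)" by (intro card_mono) auto
  also have "\<dots> \<le> card ?X0 + card ?Y0 + card ?Z0" by (meson card_Un_le add_le_mono1 le_trans)
  also have "\<dots> \<le> a * b + a * c + b * c"
  proof -
    have "card ?X0 \<le> a * b" using card_image_le[of "{..<a} \<times> {..<b}"] by (simp add: card_cartesian_product)
    moreover have "card ?Y0 \<le> a * c" using card_image_le[of "{..<a} \<times> {..<c}"] by (simp add: card_cartesian_product)
    moreover have "card ?Z0 \<le> b * c" using card_image_le[of "{..<b} \<times> {..<c}"] by (simp add: card_cartesian_product)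
    ultimately show ?thesis by linarith
  qed
  finally show ?thesis .
qed

end

context ppbox begin

definition "XP = (\<lambda>(u,v). xp u v) ` ({..<a} \<times> {..<b})"
definition "YP = (\<lambda>(u,w). yp u w) ` ({..<a} \<times> {..<c})"
definition "ZP = (\<lambda>(v,w). zp v w) ` ({..<b} \<times> {..<c})"

lemma XP_iff: "l \<in> XP \<longleftrightarrow> (\<exists>u v. u < a \<and> v < b \<and> l = xp u v)" by (auto simp: XP_def)
lemma YP_iff: "l \<in> YP \<longleftrightarrow> (\<exists>u w. u < a \<and> w < c \<and> l = yp u w)" by (auto simp: YP_def)
lemma ZP_iff: "l \<in> ZP \<longleftrightarrow> (\<exists>v w. v < b \<and> w < c \<and> l = zp v w)" by (auto simp: ZP_def)

lemma card_XP: "card XP = a * b"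
proof -
  have "inj_on (\<lambda>(u,v). xp u v) ({..<a} \<times> {..<b})"
    by (rule inj_onI) (use xp_inj in auto)
  then show ?thesis unfolding XP_def by (simp add: card_image card_cartesian_product)
qed
lemma card_YP: "card YP = a * c"
proof -
  have "inj_on (\<lambda>(u,w). yp u w) ({..<a} \<times> {..<c})"
    by (rule inj_onI) (use yp_inj in auto)
  then show ?thesis unfolding YP_def by (simp add: card_image card_cartesian_product)
qed
lemma card_ZP: "card ZP = b * c"
proof -
  have "inj_on (\<lambda>(v,w). zp v w) ({..<b} \<times> {..<c})"
    by (rule inj_onI) (use zp_inj in auto)
  then show ?thesis unfolding ZP_def by (simp add: card_image card_cartesian_product)
qed

lemma XY: "XP \<inter> YP = {}"
proof -
  { fix l assume "l \<in> XP" "l \<in> YP"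
    then obtain u v u' w where h: "u < a" "v < b" "l = xp u v" "u' < a" "w < c" "l = yp u' w"
      by (auto simp: XP_iff YP_iff)
    then have False using xy_disj by metis }
  then show ?thesis by blast
qed

lemma XZ: "XP \<inter> ZP = {}"
proof -
  { fix l assume "l \<in> XP" "l \<in> ZP"
    then obtain u v v' w where h: "u < a" "v < b" "l = xp u v" "v' < b" "w < c" "l = zp v' w"
      by (auto simp: XP_iff ZP_iff)
    then have False using xz_disj by metis }
  then show ?thesis by blast
qed

lemma YZ: "YP \<inter> ZP = {}"
proof -
  { fix l assume "l \<in> YP" "l \<in> ZP"
    then obtain u w v w' where h: "u < a" "w < c" "l = yp u w" "v < b" "w' < c" "l = zp v w'"
      by (auto simp: YP_iff ZP_iff)
    then have False using yz_disj by metis }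
  then show ?thesis by blast
qed

lemma sub_Bm: "XP \<union> YP \<union> ZP \<subseteq> Bm"
  using xp_in yp_in zp_in by (auto simp: XP_iff YP_iff ZP_iff)

lemma union_Bm: "XP \<union> YP \<union> ZP = Bm"
proof -
  have fin: "finite XP" "finite YP" "finite ZP" by (simp_all add: XP_def YP_def ZP_def)
  have "card (XP \<union> YP \<union> ZP) = card XP + card YP + card ZP"
    using fin XY XZ YZ by (simp add: card_Un_disjoint Int_Un_distrib2)
  then have "card (XP \<union> YP \<union> ZP) = a * b + a * c + b * c" by (simp add: card_XP card_YP card_ZP)
  then have "card Bm \<le> card (XP \<union> YP \<union> ZP)" using card_Bm_le by simp
  then show ?thesis using sub_Bm by (intro card_seteq) auto
qed

definition phip :: "monom \<Rightarrow> monom" where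
  "phip l = (if l \<in> XP then xs l else if l \<in> YP then ys l else if l \<in> ZP then zs l else undefined)"

lemma phip_X: "l \<in> XP \<Longrightarrow> phip l = xs l" by (simp add: phip_def)
lemma phip_Y: "l \<in> YP \<Longrightarrow> phip l = ys l" using XY by (auto simp: phip_def)
lemma phip_Z: "l \<in> ZP \<Longrightarrow> phip l = zs l" using XZ YZ by (auto simp: phip_def)

lemma phip_in: "l \<in> Bm \<Longrightarrow> phip l \<in> Bn"
proof -
  assume "l \<in> Bm"
  then have "l \<in> XP \<or> l \<in> YP \<or> l \<in> ZP" using union_Bm by blast
  then show ?thesis
  proof (elim disjE)
    assume "l \<in> XP" then show ?thesis using xp_in phip_X by (auto simp: XP_iff)
  next
    assume "l \<in> YP" then show ?thesis using yp_in phip_Y by (auto simp: YP_iff)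
  next
    assume "l \<in> ZP" then show ?thesis using zp_in phip_Z by (auto simp: ZP_iff)
  qed
qed

lemma phip_inj: "inj_on phip Bm"
proof (rule inj_onI)
  fix l l' assume l: "l \<in> Bm" and l': "l' \<in> Bm" and eq: "phip l = phip l'"
  have dx: "xs l1 = xs l2 \<Longrightarrow> l1 = l2" for l1 l2 by (cases l1, cases l2) (simp add: xs_def)
  have dy: "ys l1 = ys l2 \<Longrightarrow> l1 = l2" for l1 l2 by (cases l1, cases l2) (simp add: ys_def)
  have dz: "zs l1 = zs l2 \<Longrightarrow> l1 = l2" for l1 l2 by (cases l1, cases l2) (simp add: zs_def)
  have c: "l \<in> XP \<or> l \<in> YP \<or> l \<in> ZP" "l' \<in> XP \<or> l' \<in> YP \<or> l' \<in> ZP" using union_Bm l l' by blast+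
  have n1: "xs l1 \<noteq> ys l2" if hh: "l1 \<in> XP" "l2 \<in> YP" for l1 l2
  proof -
    obtain u v u' w where "u < a" "v < b" "l1 = xp u v" "u' < a" "w < c" "l2 = yp u' w"
      using hh by (auto simp: XP_iff YP_iff)
    then show ?thesis using xyi_disj by metis
  qed
  have n2: "xs l1 \<noteq> zs l2" if hh: "l1 \<in> XP" "l2 \<in> ZP" for l1 l2
  proof -
    obtain u v v' w where "u < a" "v < b" "l1 = xp u v" "v' < b" "w < c" "l2 = zp v' w"
      using hh by (auto simp: XP_iff ZP_iff)
    then show ?thesis using xzi_disj by metis
  qed
  have n3: "ys l1 \<noteq> zs l2" if hh: "l1 \<in> YP" "l2 \<in> ZP" for l1 l2
  proof -
    obtain u w v w' where "u < a" "w < c" "l1 = yp u w" "v < b" "w' < c" "l2 = zp v w'"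
      using hh by (auto simp: YP_iff ZP_iff)
    then show ?thesis using yzi_disj by metis
  qed
  note e1 = phip_X and e2 = phip_Y and e3 = phip_Z
  from c(1) show "l = l'"
  proof (elim disjE)
    assume a1: "l \<in> XP"
    from c(2) show ?thesis
    proof (elim disjE)
      assume "l' \<in> XP" then show ?thesis using a1 eq e1 dx by metis
    next
      assume "l' \<in> YP" then show ?thesis using a1 eq e1 e2 n1 by metis
    next
      assume "l' \<in> ZP" then show ?thesis using a1 eq e1 e3 n2 by metis
    qed
  next
    assume a1: "l \<in> YP"
    from c(2) show ?thesis
    proof (elim disjE)
      assume "l' \<in> XP" then show ?thesis using a1 eq e1 e2 n1 by metis
    next
      assume "l' \<in> YP" then show ?thesis using a1 eq e2 dy by metis
    next
      assume "l' \<in> ZP" then show ?thesis using a1 eq e2 e3 n3 by metis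
    qed
  next
    assume a1: "l \<in> ZP"
    from c(2) show ?thesis
    proof (elim disjE)
      assume "l' \<in> XP" then show ?thesis using a1 eq e1 e3 n2 by metis
    next
      assume "l' \<in> YP" then show ?thesis using a1 eq e2 e3 n3 by metis
    next
      assume "l' \<in> ZP" then show ?thesis using a1 eq e3 dz by metis
    qed
  qed
qed

lemma phip_Mt: "phip \<in> Mt"
proof -
  have im: "phip ` Bm \<subseteq> Bn" using phip_in by auto
  have "card (phip ` Bm) = card Bn" using card_image[OF phip_inj] card_Bm_Bn by simp
  then have "phip ` Bm = Bn" using im by (intro card_seteq) auto
  then have bij: "bij_betw phip Bm Bn" using phip_inj by (simp add: bij_betw_def)
  have out: "\<forall>x. x \<notin> Bm \<longrightarrow> phip x = undefined" using union_Bm by (auto simp: phip_def)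
  have st: "\<forall>l \<in> Bm. step_monom (phip l) l"
  proof
    fix l assume "l \<in> Bm"
    then have "l \<in> XP \<or> l \<in> YP \<or> l \<in> ZP" using union_Bm by blast
    then show "step_monom (phip l) l" unfolding phip_def step_monom_iff xs_def ys_def zs_def by auto
  qed
  show ?thesis using bij out st by (simp add: Mt_def)
qed

lemma Xof_phip: "Xof phip = XP"
proof
  have d: "xs l \<noteq> ys l" "xs l \<noteq> zs l" for l by (simp_all add: xs_def ys_def zs_def)
  show "Xof phip \<subseteq> XP"
  proof
    fix l assume "l \<in> Xof phip"
    then have l: "l \<in> Bm" "phip l = xs l" by (auto simp: Xof_def)
    then have "l \<in> XP \<or> l \<in> YP \<or> l \<in> ZP" using union_Bm by blast
    then show "l \<in> XP" using l(2) phip_Y phip_Z d by metis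
  qed
  show "XP \<subseteq> Xof phip" using union_Bm phip_X unfolding Xof_def by blast
qed

end

context box begin

definition diagcells :: "nat \<Rightarrow> (nat \<times> nat) set" where
  "diagcells i = {(u, v). u < a \<and> v < b \<and> b - 1 + u - v = i}"

definition L :: "nat \<Rightarrow> nat" where "L i = card (diagcells i)"

lemma fin_diag[simp]: "finite (diagcells i)"
  by (rule finite_subset[of _ "{..<a} \<times> {..<b}"]) (auto simp: diagcells_def)

lemma diag_shift:
  assumes "u < a" "v < b" "t \<le> min u v"
  shows "(u - t, v - t) \<in> diagcells (b - 1 + u - v)"
  using assms bpos by (auto simp: diagcells_def)

lemma min_le_L:
  assumes "u < a" "v < b"
  shows "min u v + 1 \<le> L (b - 1 + u - v)"
proof -
  have "(\<lambda>t. (u - t, v - t)) ` {..min u v} \<subseteq> diagcells (b - 1 + u - v)"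
    using diag_shift assms by auto
  moreover have "inj_on (\<lambda>t. (u - t, v - t)) {..min u v}"
    by (rule inj_onI) auto
  ultimately have "card {..min u v} \<le> L (b - 1 + u - v)"
    unfolding L_def by (metis card_image card_mono fin_diag)
  then show ?thesis by simp
qed

lemma exists_cell:
  assumes "1 \<le> r" "r \<le> L i"
  shows "\<exists>u v. u < a \<and> v < b \<and> b - 1 + u - v = i \<and> min u v + 1 = r"
proof -
  let ?M = "(\<lambda>(u,v). min u v) ` diagcells i"
  have inj: "inj_on (\<lambda>(u,v). min u v) (diagcells i)"
  proof (rule inj_onI)
    fix x y assume "x \<in> diagcells i" "y \<in> diagcells i" "(\<lambda>(u,v). min u v) x = (\<lambda>(u,v). min u v) y"
    then show "x = y" using bpos by (cases x, cases y) (auto simp: diagcells_def min_def split: if_splits)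
  qed
  have cM: "card ?M = L i" unfolding L_def using inj by (rule card_image)
  have dc: "y \<in> ?M" if hx: "x \<in> ?M" and hy: "y \<le> x" for x y
  proof -
    obtain u v where uv: "(u, v) \<in> diagcells i" "x = min u v" using hx by auto
    then have "(u - (x - y), v - (x - y)) \<in> diagcells i"
      using diag_shift[of u v "x - y"] by (auto simp: diagcells_def)
    moreover have "min (u - (x - y)) (v - (x - y)) = y" using uv hy by auto
    ultimately show ?thesis by force
  qed
  have "?M = {..<card ?M}" by (rule downset_eq) (use dc in auto)
  then have "r - 1 \<in> ?M" using assms cM by auto
  then obtain u v where uv: "(u, v) \<in> diagcells i" "min u v = r - 1" by auto
  then have "u < a \<and> v < b \<and> b - 1 + u - v = i \<and> min u v + 1 = r" using assms by (auto simp: diagcells_def)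
  then show ?thesis by blast
qed

end

context ppbox begin

lemma gi_xp: "gi (xp u v) = b - 1 + u - v" by (simp add: xp_def)
lemma gj_xp: "gj (xp u v) = a - 1 - u + p u v" by (simp add: xp_def)

lemma XP_block: "{l \<in> XP. gi l = i \<and> J \<le> gj l} =
   (\<lambda>(u,v). xp u v) ` {(u,v) \<in> diagcells i. J \<le> a - 1 - u + p u v}"
proof
  show "{l \<in> XP. gi l = i \<and> J \<le> gj l} \<subseteq> (\<lambda>(u,v). xp u v) ` {(u,v) \<in> diagcells i. J \<le> a - 1 - u + p u v}"
  proof
    fix l assume "l \<in> {l \<in> XP. gi l = i \<and> J \<le> gj l}"
    then obtain u v where h: "u < a" "v < b" "l = xp u v" "gi l = i" "J \<le> gj l" by (auto simp: XP_iff)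
    then have "(u, v) \<in> {(u,v) \<in> diagcells i. J \<le> a - 1 - u + p u v}"
      unfolding diagcells_def using gi_xp gj_xp by simp
    then show "l \<in> (\<lambda>(u,v). xp u v) ` {(u,v) \<in> diagcells i. J \<le> a - 1 - u + p u v}"
      using h(3) by force
  qed
  show "(\<lambda>(u,v). xp u v) ` {(u,v) \<in> diagcells i. J \<le> a - 1 - u + p u v} \<subseteq> {l \<in> XP. gi l = i \<and> J \<le> gj l}"
  proof
    fix l assume "l \<in> (\<lambda>(u,v). xp u v) ` {(u,v) \<in> diagcells i. J \<le> a - 1 - u + p u v}"
    then obtain u v where h: "u < a" "v < b" "b - 1 + u - v = i" "J \<le> a - 1 - u + p u v" "l = xp u v"
      unfolding diagcells_def by auto
    then show "l \<in> {l \<in> XP. gi l = i \<and> J \<le> gj l}" using gi_xp gj_xp XP_iff by auto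
  qed
qed

lemma card_XP_block: "card {l \<in> XP. gi l = i \<and> J \<le> gj l} = card {(u,v) \<in> diagcells i. J \<le> a - 1 - u + p u v}"
proof -
  have "inj_on (\<lambda>(u,v). xp u v) {(u,v) \<in> diagcells i. J \<le> a - 1 - u + p u v}"
  proof (rule inj_onI)
    fix x y assume hx: "x \<in> {(u,v) \<in> diagcells i. J \<le> a - 1 - u + p u v}" and hy: "y \<in> {(u,v) \<in> diagcells i. J \<le> a - 1 - u + p u v}"
      and eq: "(\<lambda>(u,v). xp u v) x = (\<lambda>(u,v). xp u v) y"
    obtain u v u' v' where xy: "x = (u,v)" "y = (u',v')" by (cases x, cases y)
    have "u < a" "v < b" "u' < a" "v' < b" "xp u v = xp u' v'" using hx hy eq unfolding xy diagcells_def by auto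
    then show "x = y" using xp_inj xy by blast
  qed
  then show ?thesis unfolding XP_block by (rule card_image)
qed

lemma Nx_phip: "Nx phip i J = card {(u,v) \<in> diagcells i. J \<le> a - 1 - u + p u v}"
  unfolding Nx_def Xof_phip by (rule card_XP_block)

lemma cube_phip:
  assumes "u < a" "v < b"
  shows "cubeJ phip u v (a - u + w) \<longleftrightarrow> w < p u v"
proof -
  let ?i = "b - 1 + u - v"
  let ?D = "{(u',v') \<in> diagcells ?i. a - u + w \<le> a - 1 - u' + p u' v'}"
  let ?g = "\<lambda>t. (u - t, v - t)"
  have fD: "finite ?D" by (rule finite_subset[of _ "diagcells ?i"]) auto
  have ginj: "inj_on ?g {..min u v}" by (rule inj_onI) auto
  show ?thesis
  proof
    assume "cubeJ phip u v (a - u + w)"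
    then have c1: "min u v + 1 \<le> card ?D" unfolding cubeJ_def Nx_phip .
    show "w < p u v"
    proof (rule ccontr)
      assume nw: "\<not> w < p u v"
      have "?D \<subseteq> ?g ` {1..min u v}"
      proof
        fix x assume hx: "x \<in> ?D"
        obtain u' v' where x: "x = (u', v')" by (cases x)
        have h: "u' < a" "v' < b" "b - 1 + u' - v' = ?i" "a - u + w \<le> a - 1 - u' + p u' v'"
          using hx unfolding x diagcells_def by auto
        have d: "u' + v = u + v'" using h assms bpos by arith
        have "u' < u"
        proof (rule ccontr)
          assume "\<not> u' < u"
          then have uu: "u \<le> u'" and vv: "v \<le> v'" using d by arith+
          have "p u' v' \<le> p u v'" using uu by (rule mono_u)
          also have "\<dots> \<le> p u v" using vv by (rule mono_v)
          finally show False using h(4) nw assms uu by arith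
        qed
        then have "x = ?g (u - u')" "u - u' \<in> {1..min u v}" using d x by auto
        then show "x \<in> ?g ` {1..min u v}" by blast
      qed
      then have "card ?D \<le> card (?g ` {1..min u v})" by (rule card_mono[rotated]) auto
      also have "\<dots> \<le> card {1..min u v}" by (rule card_image_le) auto
      also have "\<dots> = min u v" by simp
      finally show False using c1 by linarith
    qed
  next
    assume w: "w < p u v"
    have "?g ` {..min u v} \<subseteq> ?D"
    proof
      fix x assume "x \<in> ?g ` {..min u v}"
      then obtain t where t: "t \<le> min u v" "x = (u - t, v - t)" by auto
      have "p u v \<le> p (u - t) v" by (rule mono_u) simp
      also have "\<dots> \<le> p (u - t) (v - t)" by (rule mono_v) simp
      finally have pp: "p u v \<le> p (u - t) (v - t)" .
      have dc: "(u - t, v - t) \<in> diagcells ?i" using diag_shift assms t by blast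
      have "a - u + w \<le> a - 1 - (u - t) + p (u - t) (v - t)" using pp w assms t by arith
      then show "x \<in> ?D" using dc t by simp
    qed
    then have "card (?g ` {..min u v}) \<le> card ?D" using fD by (rule card_mono[rotated])
    moreover have "card (?g ` {..min u v}) = card {..min u v}" using ginj by (rule card_image)
    ultimately have "min u v + 1 \<le> card ?D" by simp
    then show "cubeJ phip u v (a - u + w)" unfolding cubeJ_def Nx_phip .
  qed
qed

lemma F_phip: "Ffun phip = p"
proof (intro ext)
  fix u v
  show "Ffun phip u v = p u v"
  proof (cases "u < a \<and> v < b")
    case True
    then have "{w. w < c \<and> cubeJ phip u v (a - u + w)} = {..<p u v}"
      using cube_phip p_le[of u v] by auto
    then show ?thesis using True by (simp add: Ffun_def)
  next
    case False
    then have "Ffun phip u v = 0" unfolding Ffun_def by auto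
    then show ?thesis using p_out False by simp
  qed
qed

lemma card_XP_i: "card {l \<in> XP. gi l = i} = L i"
  using card_XP_block[of i 0] by (simp add: L_def)

end

context box begin

lemma zero_PP: "(\<lambda>_ _. 0) \<in> box_PP a b c"
  by (simp add: box_PP_def plane_partition_def fits_in_box_def)

lemma ppbox_zero: "ppbox a b c (\<lambda>_ _. 0)"
  by (simp add: ppbox_def ppbox_axioms_def box_axioms zero_PP)

lemma sfun_L: "sfun i = L i"
proof -
  interpret P: ppbox a b c "\<lambda>_ _. 0" by (rule ppbox_zero)
  interpret M: matching a b c P.phip by (rule Mt_matching[OF P.phip_Mt])
  have "M.sx i = card {l \<in> P.XP. gi l = i}" unfolding M.sx_def M.X_eq P.Xof_phip ..
  then show ?thesis using M.sx_sfun P.card_XP_i by simp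
qed

end

context matching begin

lemma N_le_L: "N i J \<le> L i"
proof -
  have "finite {l \<in> Xof phi. gi l = i}" using fin_X X_eq by simp
  then have "N i J \<le> sx i" unfolding Nx_def sx_def X_eq by (rule card_mono) auto
  then show ?thesis using sx_sfun sfun_L by simp
qed

lemma vb:
  assumes "u < a" "v < b"
  shows "cubeJ phi u v (a - 1 - u)"
proof -
  have base: "cubeJ phi (a - 1) (b - 1) 0"
  proof -
    have "N (a - 1) 0 = sx (a - 1)" unfolding Nx_def sx_def X_eq by simp
    also have "\<dots> = L (a - 1)" using sx_sfun sfun_L by simp
    finally have "N (a - 1) 0 = L (a - 1)" .
    moreover have "min (a - 1) (b - 1) + 1 \<le> L (b - 1 + (a - 1) - (b - 1))"
      using min_le_L[of "a - 1" "b - 1"] apos bpos by simp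
    ultimately show ?thesis unfolding cubeJ_def using apos bpos by simp
  qed
  have s1: "t \<le> a - 1 \<Longrightarrow> cubeJ phi (a - 1 - t) (b - 1) t" for t
  proof (induction t)
    case 0 then show ?case using base by simp
  next
    case (Suc t)
    then have "cubeJ phi (Suc (a - 1 - Suc t)) (b - 1) t" using Suc_diff_Suc[of t "a - 1"] by simp
    then show ?case using cube_I1[of "a - 1 - Suc t" "b - 1" t] Suc.prems apos bpos by simp
  qed
  have s2: "s \<le> b - 1 \<Longrightarrow> cubeJ phi u (b - 1 - s) (a - 1 - u)" for s
  proof (induction s)
    case 0 then show ?case using s1[of "a - 1 - u"] assms by simp
  next
    case (Suc s)
    then have "cubeJ phi u (Suc (b - 1 - Suc s)) (a - 1 - u)" using Suc_diff_Suc[of s "b - 1"] by simp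
    then show ?case using cube_I2[of u "b - 1 - Suc s" "a - 1 - u"] Suc.prems assms bpos by simp
  qed
  show ?thesis using s2[of "b - 1 - v"] assms by simp
qed

lemma vt:
  assumes "u < a" "v < b"
  shows "\<not> cubeJ phi u v (a - u + c)"
proof
  assume h: "cubeJ phi u v (a - u + c)"
  have s2: "s \<le> v \<Longrightarrow> cubeJ phi u (v - s) (a - u + c)" for s
  proof (induction s)
    case 0 then show ?case using h by simp
  next
    case (Suc s)
    then have "cubeJ phi u (Suc (v - Suc s)) (a - u + c)" using Suc_diff_Suc[of s v] by simp
    then show ?case using cube_I2[of u "v - Suc s" "a - u + c"] Suc.prems assms by simp
  qed
  have s1: "t \<le> u \<Longrightarrow> cubeJ phi (u - t) 0 (a - u + c + t)" for t
  proof (induction t)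
    case 0 then show ?case using s2[of v] by simp
  next
    case (Suc t)
    then have "cubeJ phi (Suc (u - Suc t)) 0 (a - u + c + t)" using Suc_diff_Suc[of t u] by simp
    then show ?case using cube_I1[of "u - Suc t" 0 "a - u + c + t"] Suc.prems assms bpos by simp
  qed
  have "cubeJ phi 0 0 (a + c)" using s1[of u] assms by simp
  then have "1 \<le> N (b - 1) (a + c)" by (simp add: cubeJ_def)
  moreover have e: "{l \<in> Xof phi. gi l = b - 1 \<and> a + c \<le> gj l} = {}"
    using X_sub by (auto simp: X_eq[symmetric] Bm_iff)
  have "N (b - 1) (a + c) = 0" unfolding Nx_def e by simp
  ultimately show False by simp
qed

end

context box begin

lemma Nx_step:
  assumes "l \<in> Bm"
  shows "l \<in> Xof f \<longleftrightarrow> Nx f (gi l) (gj l) = Suc (Nx f (gi l) (Suc (gj l)))"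
proof -
  let ?S = "{l' \<in> Xof f. gi l' = gi l \<and> gj l \<le> gj l'}"
  let ?T = "{l' \<in> Xof f. gi l' = gi l \<and> Suc (gj l) \<le> gj l'}"
  let ?E = "{l' \<in> Xof f. gi l' = gi l \<and> gj l' = gj l}"
  have fin: "finite ?T" "finite ?E" by (auto intro: finite_subset[of _ Bm] simp: Xof_def)
  have SU: "?S = ?T \<union> ?E" by auto
  have dis: "?T \<inter> ?E = {}" by auto
  have Esub: "?E \<subseteq> {l}"
  proof
    fix l' assume "l' \<in> ?E"
    then have "l' \<in> Bm" "gi l' = gi l" "gj l' = gj l" by (auto simp: Xof_def)
    then show "l' \<in> {l}" using assms by (cases l, cases l') (auto simp: Bm_iff)
  qed
  have cS: "card ?S = card ?T + card ?E" unfolding SU using fin dis by (rule card_Un_disjoint)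
  show ?thesis
  proof
    assume "l \<in> Xof f"
    then have "?E = {l}" using Esub by auto
    then show "Nx f (gi l) (gj l) = Suc (Nx f (gi l) (Suc (gj l)))" using cS unfolding Nx_def by simp
  next
    assume h: "Nx f (gi l) (gj l) = Suc (Nx f (gi l) (Suc (gj l)))"
    show "l \<in> Xof f"
    proof (rule ccontr)
      assume "l \<notin> Xof f"
      then have "?E = {}" using Esub by auto
      then have "card ?E = 0" by (simp only: card.empty)
      then show False using cS h unfolding Nx_def by linarith
    qed
  qed
qed

lemma F_inj:
  assumes f: "f \<in> Mt" and g: "g \<in> Mt" and FF: "Ffun f = Ffun g"
  shows "f = g"
proof -
  interpret F: matching a b c f by (rule Mt_matching[OF f])
  interpret G: matching a b c g by (rule Mt_matching[OF g])
  have cw: "cubeJ f u v (a - u + w) \<longleftrightarrow> cubeJ g u v (a - u + w)" if uv: "u < a" "v < b" "w < c" for u v w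
  proof -
    let ?Sf = "{w. w < c \<and> cubeJ f u v (a - u + w)}"
    let ?Sg = "{w. w < c \<and> cubeJ g u v (a - u + w)}"
    have ds: "{w. w < c \<and> cubeJ h u v (a - u + w)} = {..<card {w. w < c \<and> cubeJ h u v (a - u + w)}}" for h
    proof (rule downset_eq)
      fix x y assume hx: "x \<in> {w. w < c \<and> cubeJ h u v (a - u + w)}" and hy: "y \<le> x"
      have le: "a - u + y \<le> a - u + x" using hy by simp
      have "cubeJ h u v (a - u + y)" using cubeJ_mono[OF le] hx by blast
      then show "y \<in> {w. w < c \<and> cubeJ h u v (a - u + w)}" using hx hy by simp
    qed simp
    have ce: "card ?Sf = card ?Sg"
    proof -
      have "Ffun f u v = Ffun g u v" using FF by simp
      then show ?thesis using uv unfolding Ffun_def by simp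
    qed
    have "?Sf = {..<card ?Sf}" by (rule ds)
    also have "\<dots> = {..<card ?Sg}" unfolding ce ..
    also have "\<dots> = ?Sg" by (rule ds[symmetric])
    finally have "?Sf = ?Sg" .
    then show ?thesis using uv by blast
  qed
  have cJ: "cubeJ f u v J \<longleftrightarrow> cubeJ g u v J" if uv: "u < a" "v < b" for u v J
  proof (cases "J \<le> a - 1 - u")
    case True
    then show ?thesis using F.vb[OF uv] G.vb[OF uv] cubeJ_mono by blast
  next
    case False
    show ?thesis
    proof (cases "a - u + c \<le> J")
      case True
      then show ?thesis using F.vt[OF uv] G.vt[OF uv] cubeJ_mono by blast
    next
      case False2: False
      obtain w where w: "J = a - u + w" "w < c"
      proof
        show "J = a - u + (J - (a - u))" "J - (a - u) < c" using False False2 uv by arith+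
      qed
      show ?thesis unfolding w(1) using cw[OF uv w(2)] .
    qed
  qed
  have NN: "Nx f i J = Nx g i J" for i J
  proof -
    have "r \<le> Nx f i J \<longleftrightarrow> r \<le> Nx g i J" for r
    proof (cases "r = 0")
      case True then show ?thesis by simp
    next
      case False
      show ?thesis
      proof (cases "r \<le> L i")
        case True
        then obtain u v where uv: "u < a" "v < b" "b - 1 + u - v = i" "min u v + 1 = r"
          using exists_cell[of r i] False by auto
        then show ?thesis using cJ[OF uv(1,2), of J] unfolding cubeJ_def by simp
      next
        case False
        then show ?thesis using F.N_le_L[of i J] G.N_le_L[of i J] by simp
      qed
    qed
    then have "Nx f i J \<le> Nx g i J" "Nx g i J \<le> Nx f i J" by auto
    then show ?thesis by (rule le_antisym)
  qed
  have "Xof f = Xof g"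
  proof -
    have "l \<in> Xof f \<longleftrightarrow> l \<in> Xof g" for l
    proof (cases "l \<in> Bm")
      case True
      show ?thesis using Nx_step[OF True, of f] Nx_step[OF True, of g] NN by simp
    next
      case False
      then show ?thesis by (simp add: Xof_def)
    qed
    then show ?thesis by blast
  qed
  then show ?thesis by (rule X_determines[OF f g])
qed

lemma F_bij: "bij_betw Ffun Mt (box_PP a b c)"
proof -
  have "inj_on Ffun Mt" by (rule inj_onI) (rule F_inj)
  moreover have "Ffun ` Mt = box_PP a b c"
  proof
    show "Ffun ` Mt \<subseteq> box_PP a b c"
      using matching.F_in_PP Mt_matching by blast
    show "box_PP a b c \<subseteq> Ffun ` Mt"
    proof
      fix p assume p: "p \<in> box_PP a b c"
      interpret P: ppbox a b c p by (simp add: ppbox_def ppbox_axioms_def box_axioms p)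
      have "p = Ffun P.phip" using P.F_phip by simp
      then show "p \<in> Ffun ` Mt" using P.phip_Mt by blast
    qed
  qed
  ultimately show ?thesis by (simp add: bij_betw_def)
qed

end

definition invs :: "(nat \<Rightarrow> nat) \<Rightarrow> nat \<Rightarrow> (nat \<times> nat) set" where
  "invs p n = {(x, y). x < y \<and> y < n \<and> p y < p x}"

lemma fin_invs[simp]: "finite (invs p n)"
  by (rule finite_subset[of _ "{..<n} \<times> {..<n}"]) (auto simp: invs_def)

lemma noinv_id:
  assumes p: "p permutes {..<n}" and ni: "invs p n = {}"
  shows "p = id"
proof -
  have mono: "x < y \<Longrightarrow> y < n \<Longrightarrow> p x < p y" for x y
  proof -
    assume xy: "x < y" "y < n"
    have "\<not> p y < p x" using ni xy by (auto simp: invs_def)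
    moreover have "p x \<noteq> p y" using permutes_inj[OF p] xy by (metis inj_eq less_irrefl)
    ultimately show "p x < p y" by simp
  qed
  have fix1: "x < n \<Longrightarrow> p x = x" for x
  proof (induction x rule: less_induct)
    case (less x)
    have ge: "x \<le> p x"
    proof (rule ccontr)
      assume "\<not> x \<le> p x"
      then have "p x < x" by simp
      then have "p (p x) = p x" using less by simp
      then have "p x = x" using permutes_inj[OF p] by (metis inj_eq)
      then show False using \<open>p x < x\<close> by simp
    qed
    obtain y where y: "y < n" "p y = x"
      using permutes_surj[OF p] less.prems by (metis lessThan_iff permutes_image[OF p] imageE)
    have "y = x"
    proof (rule ccontr)
      assume "y \<noteq> x"
      then consider "y < x" | "x < y" by linarith
      then show False
      proof cases
        case 1 then have "p y = y" using less by simp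
        then show False using y 1 by simp
      next
        case 2 then have "p x < p y" using mono[OF 2 y(1)] by simp
        then show False using ge y by simp
      qed
    qed
    then show ?case using y by simp
  qed
  show ?thesis
  proof
    fix x show "p x = id x"
    proof (cases "x < n")
      case True then show ?thesis using fix1 by simp
    next
      case False then show ?thesis using permutes_not_in[OF p] by simp
    qed
  qed
qed

lemma descent_exists:
  assumes "(x, y) \<in> invs p n"
  shows "\<exists>i. Suc i < n \<and> p (Suc i) < p i"
proof (rule ccontr)
  assume nd: "\<not> (\<exists>i. Suc i < n \<and> p (Suc i) < p i)"
  have "x + d < n \<Longrightarrow> p x \<le> p (x + d)" for d
  proof (induction d)
    case 0 then show ?case by simp
  next
    case (Suc d)
    then have "p x \<le> p (x + d)" by simp
    moreover have "p (x + d) \<le> p (Suc (x + d))" using nd Suc.prems by (metis add_Suc_right not_le)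
    ultimately show ?case by simp
  qed
  from this[of "y - x"] assms show False by (auto simp: invs_def)
qed

lemma transp_order:
  assumes "x < y" "(x, y) \<noteq> (i, Suc i)"
  shows "transpose i (Suc i) x < transpose i (Suc i) y"
  using assms by (auto simp: transpose_def)

lemma sign_invs:
  assumes "p permutes {..<n}"
  shows "sign p = (-1) ^ card (invs p n)"
  using assms
proof (induction "card (invs p n)" arbitrary: p rule: less_induct)
  case less
  note p = less.prems
  show ?case
  proof (cases "invs p n = {}")
    case True
    then show ?thesis using noinv_id[OF p] by simp
  next
    case False
    then obtain x y where "(x, y) \<in> invs p n" by auto
    then obtain i where i: "Suc i < n" "p (Suc i) < p i" using descent_exists by blast
    define t where "t = transpose i (Suc i)"
    define q where "q = p \<circ> t"
    have tperm: "t permutes {..<n}" unfolding t_def using i by (intro permutes_swap_id) auto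
    have qperm: "q permutes {..<n}" unfolding q_def using tperm p by (rule permutes_compose)
    have tt: "t (t z) = z" for z by (simp add: t_def)
    have sq: "sign q = - sign p"
    proof -
      have "sign q = sign p * sign t"
        unfolding q_def using p tperm by (intro sign_compose) (auto intro: permutes_imp_permutation)
      also have "sign t = -1" unfolding t_def by (simp add: sign_swap_id)
      finally show ?thesis by simp
    qed
    let ?h = "\<lambda>(x, y). (t x, t y)"
    have notin: "(i, Suc i) \<notin> invs q n" using i by (simp add: invs_def q_def t_def)
    have img: "invs p n = ?h ` invs q n \<union> {(i, Suc i)}"
    proof
      show "invs p n \<subseteq> ?h ` invs q n \<union> {(i, Suc i)}"
      proof
        fix z assume z: "z \<in> invs p n"
        obtain x y where xy: "z = (x, y)" by (cases z)
        show "z \<in> ?h ` invs q n \<union> {(i, Suc i)}"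
        proof (cases "(x, y) = (i, Suc i)")
          case True then show ?thesis using xy by simp
        next
          case False
          have h1: "x < y" "y < n" "p y < p x" using z xy by (auto simp: invs_def)
          have "t x < t y" unfolding t_def using transp_order[OF h1(1) False] .
          moreover have "t y < n" using tperm h1 by (metis lessThan_iff permutes_in_image)
          moreover have "q (t y) < q (t x)" using h1 tt by (simp add: q_def)
          ultimately have "(t x, t y) \<in> invs q n" by (simp add: invs_def)
          moreover have "z = ?h (t x, t y)" using xy tt by simp
          ultimately show ?thesis by blast
        qed
      qed
      show "?h ` invs q n \<union> {(i, Suc i)} \<subseteq> invs p n"
      proof
        fix z assume "z \<in> ?h ` invs q n \<union> {(i, Suc i)}"
        then consider "z = (i, Suc i)" | "z \<in> ?h ` invs q n" by blast
        then show "z \<in> invs p n"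
        proof cases
          case 1 then show ?thesis using i by (simp add: invs_def)
        next
          case 2
          then obtain x y where xy: "(x, y) \<in> invs q n" "z = (t x, t y)" by auto
          have h1: "x < y" "y < n" "q y < q x" using xy by (auto simp: invs_def)
          have ne: "(x, y) \<noteq> (i, Suc i)" using xy(1) notin by auto
          have "t x < t y" unfolding t_def using transp_order[OF h1(1) ne] .
          moreover have "t y < n" using tperm h1 by (metis lessThan_iff permutes_in_image)
          moreover have "p (t y) < p (t x)" using h1 by (simp add: q_def)
          ultimately show ?thesis using xy by (simp add: invs_def)
        qed
      qed
    qed
    have hinj: "inj_on ?h (invs q n)"
    proof (rule inj_onI)
      fix u w assume "u \<in> invs q n" "w \<in> invs q n" "?h u = ?h w"
      then show "u = w" using tt by (cases u, cases w) (metis prod.inject case_prod_conv)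
    qed
    have "(i, Suc i) \<notin> ?h ` invs q n"
    proof
      assume "(i, Suc i) \<in> ?h ` invs q n"
      then obtain x y where "(x, y) \<in> invs q n" "(t x, t y) = (i, Suc i)" by auto
      then have "x = Suc i" "y = i" using tt by (auto simp: t_def transpose_def split: if_splits)
      then show False using \<open>(x, y) \<in> invs q n\<close> by (simp add: invs_def)
    qed
    then have cp: "card (invs p n) = card (invs q n) + 1"
      unfolding img using card_image[OF hinj] by simp
    then have "sign q = (-1) ^ card (invs q n)" using less.hyps qperm by simp
    then show ?thesis using sq cp by simp
  qed
qed

lemma less_monom: "(l::monom) < l' \<longleftrightarrow> gi l < gi l' \<or> gi l = gi l' \<and> (gj l < gj l' \<or> gj l = gj l' \<and> gk l < gk l')"
  by (cases l, cases l') auto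

context box begin

definition INVof :: "(monom \<Rightarrow> monom) \<Rightarrow> (monom \<times> monom) set" where
  "INVof f = {(l, l'). l \<in> Bm \<and> l' \<in> Bm \<and> l < l' \<and> f l' < f l}"

definition lc :: "nat \<Rightarrow> nat" where "lc i = a - 1 - i"
definition hr :: "nat \<Rightarrow> nat" where "hr i = min (a + c - 1) (a + b + c - 1 - i)"
definition tt :: "nat \<Rightarrow> nat" where "tt i = card (C i) - sfun i"

definition Kconst :: int where
  "Kconst = (\<Sum>l\<in>Bm. int (gj l)) - (\<Sum>l\<in>Bn. int (gj l))
     + (\<Sum>i<a+b. int (tt i) * (int (hr i) - int (lc i) - int (tt i) + 1))"

lemma cnt_lt:
  assumes "l' \<in> C i"
  shows "card {l \<in> C i. gj l < gj l'} = gj l' - lc i" "lc i \<le> gj l'"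
proof -
  have l': "gi l' = i" "gi l' + gj l' + gk l' = a + b + c - 2" "gj l' < a + c" "gk l' < b + c" "i < a + b"
    using assms by (auto simp: C_def Bm_iff)
  show lcl: "lc i \<le> gj l'" using l' unfolding lc_def by arith
  have inj: "inj_on gj {l \<in> C i. gj l < gj l'}"
  proof (rule inj_onI)
    fix x y assume "x \<in> {l \<in> C i. gj l < gj l'}" "y \<in> {l \<in> C i. gj l < gj l'}" "gj x = gj y"
    then show "x = y" by (cases x, cases y) (auto simp: C_def Bm_iff)
  qed
  have "gj ` {l \<in> C i. gj l < gj l'} = {lc i..<gj l'}"
  proof
    show "gj ` {l \<in> C i. gj l < gj l'} \<subseteq> {lc i..<gj l'}"
    proof
      fix j assume "j \<in> gj ` {l \<in> C i. gj l < gj l'}"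
      then obtain l where l: "l \<in> C i" "gj l < gj l'" "j = gj l" by auto
      then have "gi l = i" "gi l + gj l + gk l = a + b + c - 2" "gk l < b + c" by (auto simp: C_def Bm_iff)
      then show "j \<in> {lc i..<gj l'}" using l unfolding lc_def by auto
    qed
    show "{lc i..<gj l'} \<subseteq> gj ` {l \<in> C i. gj l < gj l'}"
    proof
      fix j assume j: "j \<in> {lc i..<gj l'}"
      let ?l = "(i, j, a + b + c - 2 - i - j)"
      have "?l \<in> C i" using j l' unfolding C_def Bm_iff lc_def by auto
      then show "j \<in> gj ` {l \<in> C i. gj l < gj l'}" using j by force
    qed
  qed
  then show "card {l \<in> C i. gj l < gj l'} = gj l' - lc i"
    using card_image[OF inj] by simp
qed

lemma cnt_gt:
  assumes "m' \<in> R i"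
  shows "card {m \<in> R i. gj m' < gj m} = hr i - gj m'" "gj m' \<le> hr i"
proof -
  have m': "gi m' = i" "gi m' + gj m' + gk m' = a + b + c - 1" "gj m' < a + c" "gk m' < b + c" "i < a + b"
    using assms apos bpos cpos by (auto simp: R_def Bn_iff)
  show "gj m' \<le> hr i" using m' unfolding hr_def by arith
  have inj: "inj_on gj {m \<in> R i. gj m' < gj m}"
  proof (rule inj_onI)
    fix x y assume "x \<in> {m \<in> R i. gj m' < gj m}" "y \<in> {m \<in> R i. gj m' < gj m}" "gj x = gj y"
    then show "x = y" by (cases x, cases y) (auto simp: R_def Bn_iff)
  qed
  have "gj ` {m \<in> R i. gj m' < gj m} = {gj m'<..hr i}"
  proof
    show "gj ` {m \<in> R i. gj m' < gj m} \<subseteq> {gj m'<..hr i}"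
    proof
      fix j assume "j \<in> gj ` {m \<in> R i. gj m' < gj m}"
      then obtain m where m: "m \<in> R i" "gj m' < gj m" "j = gj m" by auto
      then have "gi m = i" "gi m + gj m + gk m = a + b + c - 1" "gj m < a + c"
        using apos bpos cpos by (auto simp: R_def Bn_iff)
      then show "j \<in> {gj m'<..hr i}" using m unfolding hr_def by auto
    qed
    show "{gj m'<..hr i} \<subseteq> gj ` {m \<in> R i. gj m' < gj m}"
    proof
      fix j assume j: "j \<in> {gj m'<..hr i}"
      let ?m = "(i, j, a + b + c - 1 - i - j)"
      have "?m \<in> R i" using j m' apos bpos cpos unfolding R_def Bn_iff hr_def by auto
      then show "j \<in> gj ` {m \<in> R i. gj m' < gj m}" using j by force
    qed
  qed
  then show "card {m \<in> R i. gj m' < gj m} = hr i - gj m'"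
    using card_image[OF inj] by simp
qed

end

context matching begin

abbreviation "Nn \<equiv> Bm - X"

lemma fin_Nn[simp]: "finite Nn" by simp

lemma X_facts: "l \<in> X \<Longrightarrow> phi l = xs l \<and> l \<in> Bm" by (simp add: X_def)
lemma N_facts: "l \<in> Bm \<Longrightarrow> l \<notin> X \<Longrightarrow> phi l = ys l \<or> phi l = zs l"
  using step[of l] by (auto simp: X_def)

lemma gi_phiN: "l \<in> Nn \<Longrightarrow> gi (phi l) = gi l" using N_facts[of l] by (auto simp: ys_def zs_def)
lemma gj_phiX: "l \<in> X \<Longrightarrow> gj (phi l) = gj l" using X_facts[of l] by (simp add: xs_def)

lemma INV_char:
  "INVof phi = {(l, l'). l \<in> X \<and> l' \<in> Nn \<and>
      (gi l = gi l' \<and> gj l < gj l' \<or> gi l + 1 = gi l' \<and> gj (phi l') < gj l)}"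
proof -
  have key: "(l < l' \<and> phi l' < phi l) \<longleftrightarrow> (l \<in> X \<and> l' \<notin> X \<and>
      (gi l = gi l' \<and> gj l < gj l' \<or> gi l + 1 = gi l' \<and> gj (phi l') < gj l))"
    if l: "l \<in> Bm" and l': "l' \<in> Bm" for l l'
  proof -
    obtain i j k where lq: "l = (i, j, k)" by (cases l)
    obtain i' j' k' where lq': "l' = (i', j', k')" by (cases l')
    have dl: "i + j + k = i' + j' + k'" using l l' lq lq' by (simp add: Bm_iff)
    have xl: "l \<in> X \<longleftrightarrow> phi l = xs l" using l by (simp add: X_def)
    have xl': "l' \<in> X \<longleftrightarrow> phi l' = xs l'" using l' by (simp add: X_def)
    have d: "xs q \<noteq> ys q" "xs q \<noteq> zs q" for q :: monom by (simp_all add: xs_def ys_def zs_def)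
    have dd: "xs l \<noteq> ys l" "xs l \<noteq> zs l" "xs l' \<noteq> ys l'" "xs l' \<noteq> zs l'" using d by auto
    consider "phi l = xs l" | "phi l = ys l" | "phi l = zs l" using step[OF l] by blast
    then show ?thesis
    proof cases
      case 1
      consider "phi l' = xs l'" | "phi l' = ys l'" | "phi l' = zs l'" using step[OF l'] by blast
      then show ?thesis
      proof cases
        case 1
        have e1: "l \<in> X \<longleftrightarrow> True" using xl \<open>phi l = xs l\<close> dd by auto
        have e2: "l' \<in> X \<longleftrightarrow> True" using xl' \<open>phi l' = xs l'\<close> dd by auto
        show ?thesis unfolding e1 e2 \<open>phi l = xs l\<close> \<open>phi l' = xs l'\<close> unfolding lq lq'
          using dl by (simp add: xs_def ys_def zs_def) arith?
      next
        case 2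
        have e1: "l \<in> X \<longleftrightarrow> True" using xl \<open>phi l = xs l\<close> dd by auto
        have e2: "l' \<in> X \<longleftrightarrow> False" using xl' \<open>phi l' = ys l'\<close> dd by auto
        show ?thesis unfolding e1 e2 \<open>phi l = xs l\<close> \<open>phi l' = ys l'\<close> unfolding lq lq'
          using dl by (simp add: xs_def ys_def zs_def) arith?
      next
        case 3
        have e1: "l \<in> X \<longleftrightarrow> True" using xl \<open>phi l = xs l\<close> dd by auto
        have e2: "l' \<in> X \<longleftrightarrow> False" using xl' \<open>phi l' = zs l'\<close> dd by auto
        show ?thesis unfolding e1 e2 \<open>phi l = xs l\<close> \<open>phi l' = zs l'\<close> unfolding lq lq'
          using dl by (simp add: xs_def ys_def zs_def) arith?
      qed
    next
      case 2
      consider "phi l' = xs l'" | "phi l' = ys l'" | "phi l' = zs l'" using step[OF l'] by blast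
      then show ?thesis
      proof cases
        case 1
        have e1: "l \<in> X \<longleftrightarrow> False" using xl \<open>phi l = ys l\<close> dd by auto
        have e2: "l' \<in> X \<longleftrightarrow> True" using xl' \<open>phi l' = xs l'\<close> dd by auto
        show ?thesis unfolding e1 e2 \<open>phi l = ys l\<close> \<open>phi l' = xs l'\<close> unfolding lq lq'
          using dl by (simp add: xs_def ys_def zs_def) arith?
      next
        case 2
        have e1: "l \<in> X \<longleftrightarrow> False" using xl \<open>phi l = ys l\<close> dd by auto
        have e2: "l' \<in> X \<longleftrightarrow> False" using xl' \<open>phi l' = ys l'\<close> dd by auto
        show ?thesis unfolding e1 e2 \<open>phi l = ys l\<close> \<open>phi l' = ys l'\<close> unfolding lq lq'
          using dl by (simp add: xs_def ys_def zs_def) arith?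
      next
        case 3
        have e1: "l \<in> X \<longleftrightarrow> False" using xl \<open>phi l = ys l\<close> dd by auto
        have e2: "l' \<in> X \<longleftrightarrow> False" using xl' \<open>phi l' = zs l'\<close> dd by auto
        show ?thesis unfolding e1 e2 \<open>phi l = ys l\<close> \<open>phi l' = zs l'\<close> unfolding lq lq'
          using dl by (simp add: xs_def ys_def zs_def) arith?
      qed
    next
      case 3
      consider "phi l' = xs l'" | "phi l' = ys l'" | "phi l' = zs l'" using step[OF l'] by blast
      then show ?thesis
      proof cases
        case 1
        have e1: "l \<in> X \<longleftrightarrow> False" using xl \<open>phi l = zs l\<close> dd by auto
        have e2: "l' \<in> X \<longleftrightarrow> True" using xl' \<open>phi l' = xs l'\<close> dd by auto
        show ?thesis unfolding e1 e2 \<open>phi l = zs l\<close> \<open>phi l' = xs l'\<close> unfolding lq lq'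
          using dl by (simp add: xs_def ys_def zs_def) arith?
      next
        case 2
        have e1: "l \<in> X \<longleftrightarrow> False" using xl \<open>phi l = zs l\<close> dd by auto
        have e2: "l' \<in> X \<longleftrightarrow> False" using xl' \<open>phi l' = ys l'\<close> dd by auto
        show ?thesis unfolding e1 e2 \<open>phi l = zs l\<close> \<open>phi l' = ys l'\<close> unfolding lq lq'
          using dl by (simp add: xs_def ys_def zs_def) arith?
      next
        case 3
        have e1: "l \<in> X \<longleftrightarrow> False" using xl \<open>phi l = zs l\<close> dd by auto
        have e2: "l' \<in> X \<longleftrightarrow> False" using xl' \<open>phi l' = zs l'\<close> dd by auto
        show ?thesis unfolding e1 e2 \<open>phi l = zs l\<close> \<open>phi l' = zs l'\<close> unfolding lq lq'
          using dl by (simp add: xs_def ys_def zs_def) arith?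
      qed
    qed
  qed
  show ?thesis
    unfolding set_eq_iff
  proof (intro allI)
    fix z :: "monom \<times> monom"
    obtain l l' where z: "z = (l, l')" by (cases z)
    show "z \<in> INVof phi \<longleftrightarrow> z \<in> {(l, l'). l \<in> X \<and> l' \<in> Nn \<and>
      (gi l = gi l' \<and> gj l < gj l' \<or> gi l + 1 = gi l' \<and> gj (phi l') < gj l)}"
    proof (cases "l \<in> Bm \<and> l' \<in> Bm")
      case True
      then show ?thesis using key[of l l'] unfolding z INVof_def by simp
    next
      case False
      then show ?thesis using X_sub unfolding z INVof_def by auto
    qed
  qed
qed


definition Aset where "Aset l' = {l \<in> X. gi l = gi l' \<and> gj l < gj l'}"
definition Bset where "Bset l' = {l \<in> X. gi l + 1 = gi l' \<and> gj (phi l') < gj l}"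
definition NL where "NL l' = {l \<in> C (gi l') - X. gj l < gj l'}"
definition NG where "NG l' = {l \<in> C (gi l') - X. gj (phi l') < gj (phi l)}"

lemma fin_sets[simp]: "finite (Aset l')" "finite (Bset l')" "finite (NL l')" "finite (NG l')"
  by (auto simp: Aset_def Bset_def NL_def NG_def)

lemma card_INV_sum: "card (INVof phi) = (\<Sum>l'\<in>Nn. card (Aset l') + card (Bset l'))"
proof -
  let ?sw = "\<lambda>(l', l::monom). (l, l')"
  have eq: "INVof phi = ?sw ` (SIGMA l':Nn. Aset l' \<union> Bset l')"
    unfolding INV_char Aset_def Bset_def by auto
  have inj: "inj_on ?sw (SIGMA l':Nn. Aset l' \<union> Bset l')" by (rule inj_onI) auto
  have "card (INVof phi) = card (SIGMA l':Nn. Aset l' \<union> Bset l')" unfolding eq using inj by (rule card_image)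
  also have "\<dots> = (\<Sum>l'\<in>Nn. card (Aset l' \<union> Bset l'))" by (rule card_SigmaI) auto
  also have "\<dots> = (\<Sum>l'\<in>Nn. card (Aset l') + card (Bset l'))"
  proof (rule sum.cong)
    fix l' assume "l' \<in> Nn"
    have "Aset l' \<inter> Bset l' = {}" by (auto simp: Aset_def Bset_def)
    then show "card (Aset l' \<union> Bset l') = card (Aset l') + card (Bset l')" by (intro card_Un_disjoint) auto
  qed simp
  finally show ?thesis .
qed

lemma cardA:
  assumes "l' \<in> Nn"
  shows "card (Aset l') + card (NL l') = gj l' - lc (gi l')"
proof -
  have lC: "l' \<in> C (gi l')" using assms by (simp add: C_def)
  have "{l \<in> C (gi l'). gj l < gj l'} = Aset l' \<union> NL l'"
    using X_sub by (auto simp: Aset_def NL_def C_def)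
  moreover have "Aset l' \<inter> NL l' = {}" by (auto simp: Aset_def NL_def)
  ultimately have "card {l \<in> C (gi l'). gj l < gj l'} = card (Aset l') + card (NL l')"
    by (simp add: card_Un_disjoint)
  then show ?thesis using cnt_lt(1)[OF lC] by simp
qed

lemma cardB:
  assumes "l' \<in> Nn"
  shows "card (Bset l') + card (NG l') = hr (gi l') - gj (phi l')"
proof -
  define i where "i = gi l'"
  have mR: "phi l' \<in> R i" using assms mapsto gi_phiN by (simp add: R_def i_def)
  have eq: "{m \<in> R i. gj (phi l') < gj m} = phi ` Bset l' \<union> phi ` NG l'"
  proof
    show "{m \<in> R i. gj (phi l') < gj m} \<subseteq> phi ` Bset l' \<union> phi ` NG l'"
    proof
      fix m assume m: "m \<in> {m \<in> R i. gj (phi l') < gj m}"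
      then have "m \<in> phi ` (C i - X) \<union> phi ` {l \<in> X. gi l + 1 = i}" using R_decomp by auto
      then show "m \<in> phi ` Bset l' \<union> phi ` NG l'"
      proof
        assume "m \<in> phi ` (C i - X)"
        then obtain l where "l \<in> C i - X" "m = phi l" by auto
        then show ?thesis using m by (auto simp: NG_def i_def)
      next
        assume "m \<in> phi ` {l \<in> X. gi l + 1 = i}"
        then obtain l where l: "l \<in> X" "gi l + 1 = i" "m = phi l" by auto
        then have "gj m = gj l" using gj_phiX by simp
        then show ?thesis using m l by (auto simp: Bset_def i_def)
      qed
    qed
    show "phi ` Bset l' \<union> phi ` NG l' \<subseteq> {m \<in> R i. gj (phi l') < gj m}"
    proof
      fix m assume "m \<in> phi ` Bset l' \<union> phi ` NG l'"
      then consider l where "l \<in> Bset l'" "m = phi l" | l where "l \<in> NG l'" "m = phi l" by blast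
      then show "m \<in> {m \<in> R i. gj (phi l') < gj m}"
      proof cases
        case 1
        then have "l \<in> X" "gi l + 1 = i" "gj (phi l') < gj l" by (auto simp: Bset_def i_def)
        then show ?thesis using 1 X_facts[of l] mapsto[of l] gj_phiX[of l] by (auto simp: R_def xs_def)
      next
        case 2
        then have "l \<in> C i - X" "gj (phi l') < gj (phi l)" by (auto simp: NG_def i_def)
        then show ?thesis using 2 mapsto[of l] gi_phiN[of l] by (auto simp: R_def C_def)
      qed
    qed
  qed
  have sub: "Bset l' \<union> NG l' \<subseteq> Bm" using X_sub by (auto simp: Bset_def NG_def C_def)
  have dis: "Bset l' \<inter> NG l' = {}" by (auto simp: Bset_def NG_def)
  have "card (phi ` Bset l' \<union> phi ` NG l') = card (phi ` (Bset l' \<union> NG l'))" by (simp add: image_Un)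
  also have "\<dots> = card (Bset l' \<union> NG l')" using inj_on_subset[OF inj sub] by (rule card_image)
  also have "\<dots> = card (Bset l') + card (NG l')" using dis by (intro card_Un_disjoint) auto
  finally show ?thesis using cnt_gt(1)[OF mR] eq by (simp add: i_def)
qed

lemma sameblock_gj:
  assumes "l \<in> C i" "l' \<in> C i" "gj l = gj l'"
  shows "l = l'"
  using assms by (cases l, cases l') (auto simp: C_def Bm_iff)

lemma sameblock_gj_phi:
  assumes "l \<in> C i - X" "l' \<in> C i - X" "gj (phi l) = gj (phi l')"
  shows "l = l'"
proof -
  have B: "l \<in> Bm" "l' \<in> Bm" using assms by (auto simp: C_def)
  have "gi (phi l) = gi (phi l')" using assms gi_phiN by (auto simp: C_def)
  moreover have "phi l \<in> Bn" "phi l' \<in> Bn" using B mapsto by auto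
  ultimately have "phi l = phi l'" using assms(3)
    by (cases "phi l", cases "phi l'") (auto simp: Bn_iff)
  then show ?thesis using inj B by (auto dest: inj_onD)
qed

lemma pairs_sum: "(\<Sum>l'\<in>Nn. card (NL l') + card (NG l')) = (\<Sum>l'\<in>Nn. tt (gi l') - 1)"
proof -
  let ?sw = "\<lambda>(l', l::monom). (l, l')"
  let ?P = "SIGMA l':Nn. (C (gi l') - X - {l'})"
  let ?S1 = "SIGMA l':Nn. NL l'"
  let ?S2 = "SIGMA l':Nn. NG l'"
  have finP: "finite ?P" by (intro finite_SigmaI) auto
  have swinj: "inj_on ?sw A" for A by (rule inj_onI) auto
  have P1: "?P = ?S1 \<union> ?sw ` ?S1"
  proof
    show "?P \<subseteq> ?S1 \<union> ?sw ` ?S1"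
    proof
      fix z assume z: "z \<in> ?P"
      obtain l' l where zz: "z = (l', l)" by (cases z)
      have h: "l' \<in> Nn" "l \<in> C (gi l') - X" "l \<noteq> l'" using z zz by auto
      have lC: "l' \<in> C (gi l')" using h by (simp add: C_def)
      have "gj l \<noteq> gj l'" using sameblock_gj[of l "gi l'" l'] h lC by auto
      then consider "gj l < gj l'" | "gj l' < gj l" by linarith
      then show "z \<in> ?S1 \<union> ?sw ` ?S1"
      proof cases
        case 1 then show ?thesis using h zz by (auto simp: NL_def)
      next
        case 2
        have "gi l = gi l'" using h by (simp add: C_def)
        then have "(l, l') \<in> ?S1" using h 2 lC by (auto simp: NL_def C_def)
        then show ?thesis using zz by force
      qed
    qed
    show "?S1 \<union> ?sw ` ?S1 \<subseteq> ?P"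
      by (auto simp: NL_def C_def)
  qed
  have D1: "?S1 \<inter> ?sw ` ?S1 = {}" by (auto simp: NL_def C_def)
  have c1: "card ?P = 2 * card ?S1"
  proof -
    have "card ?P = card ?S1 + card (?sw ` ?S1)" unfolding P1 using D1 finP P1
      by (intro card_Un_disjoint) (auto intro: finite_subset)
    also have "card (?sw ` ?S1) = card ?S1" using swinj by (rule card_image)
    finally show ?thesis by simp
  qed
  have P2: "?P = ?S2 \<union> ?sw ` ?S2"
  proof
    show "?P \<subseteq> ?S2 \<union> ?sw ` ?S2"
    proof
      fix z assume z: "z \<in> ?P"
      obtain l' l where zz: "z = (l', l)" by (cases z)
      have h: "l' \<in> Nn" "l \<in> C (gi l') - X" "l \<noteq> l'" using z zz by auto
      have lC: "l' \<in> C (gi l') - X" using h by (simp add: C_def)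
      have "gj (phi l) \<noteq> gj (phi l')" using sameblock_gj_phi[of l "gi l'" l'] h lC by auto
      then consider "gj (phi l') < gj (phi l)" | "gj (phi l) < gj (phi l')" by linarith
      then show "z \<in> ?S2 \<union> ?sw ` ?S2"
      proof cases
        case 1 then show ?thesis using h zz by (auto simp: NG_def)
      next
        case 2
        have "gi l = gi l'" using h by (simp add: C_def)
        then have "(l, l') \<in> ?S2" using h 2 lC by (auto simp: NG_def C_def)
        then show ?thesis using zz by force
      qed
    qed
    show "?S2 \<union> ?sw ` ?S2 \<subseteq> ?P"
      by (auto simp: NG_def C_def)
  qed
  have D2: "?S2 \<inter> ?sw ` ?S2 = {}" by (auto simp: NG_def C_def)
  have c2: "card ?P = 2 * card ?S2"
  proof -
    have "card ?P = card ?S2 + card (?sw ` ?S2)" unfolding P2 using D2 finP P2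
      by (intro card_Un_disjoint) (auto intro: finite_subset)
    also have "card (?sw ` ?S2) = card ?S2" using swinj by (rule card_image)
    finally show ?thesis by simp
  qed
  have "(\<Sum>l'\<in>Nn. card (NL l') + card (NG l')) = card ?S1 + card ?S2"
    by (simp add: sum.distrib)
  also have "\<dots> = card ?P" using c1 c2 by simp
  also have "\<dots> = (\<Sum>l'\<in>Nn. card (C (gi l') - X - {l'}))" by (rule card_SigmaI) auto
  also have "\<dots> = (\<Sum>l'\<in>Nn. tt (gi l') - 1)"
  proof (rule sum.cong)
    fix l' assume "l' \<in> Nn"
    then have "l' \<in> C (gi l') - X" by (simp add: C_def)
    then show "card (C (gi l') - X - {l'}) = tt (gi l') - 1"
      using card_CX[of "gi l'"] by (simp add: tt_def)
  qed simp
  finally show ?thesis .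
qed


lemma tt_pos: "l' \<in> Nn \<Longrightarrow> 1 \<le> tt (gi l')"
proof -
  assume "l' \<in> Nn"
  then have "l' \<in> C (gi l') - X" by (simp add: C_def)
  then have "C (gi l') - X \<noteq> {}" by blast
  then have "card (C (gi l') - X) \<ge> 1" using card_gt_0_iff[of "C (gi l') - X"] by simp
  then show ?thesis using card_CX[of "gi l'"] by (simp add: tt_def)
qed

lemma sum_gj: "(\<Sum>l'\<in>Nn. int (gj l') - int (gj (phi l'))) = (\<Sum>l\<in>Bm. int (gj l)) - (\<Sum>l\<in>Bn. int (gj l))"
proof -
  have "(\<Sum>l\<in>Bm. int (gj l) - int (gj (phi l))) = (\<Sum>l'\<in>Nn. int (gj l') - int (gj (phi l'))) + (\<Sum>l\<in>X. int (gj l) - int (gj (phi l)))"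
    using X_sub by (intro sum.subset_diff) auto
  moreover have "(\<Sum>l\<in>X. int (gj l) - int (gj (phi l))) = 0" using gj_phiX by (intro sum.neutral) simp
  moreover have "(\<Sum>l\<in>Bm. int (gj (phi l))) = (\<Sum>l\<in>Bn. int (gj l))"
    using bij by (rule sum.reindex_bij_betw)
  ultimately show ?thesis by (simp add: sum_subtractf)
qed

lemma sum_group_gi: "(\<Sum>l'\<in>Nn. G (gi l')) = (\<Sum>i<a+b. int (tt i) * G i)"
proof -
  have inner: "(\<Sum>l'\<in>{x \<in> Nn. gi x = i}. G (gi l')) = int (tt i) * G i" for i
  proof -
    have e: "{x \<in> Nn. gi x = i} = C i - X" by (auto simp: C_def)
    have "(\<Sum>l'\<in>{x \<in> Nn. gi x = i}. G (gi l')) = (\<Sum>l'\<in>C i - X. G i)" unfolding e by (rule sum.cong) (auto simp: C_def)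
    also have "\<dots> = int (card (C i - X)) * G i" by simp
    finally show ?thesis using card_CX[of i] by (simp add: tt_def)
  qed
  have "(\<Sum>l'\<in>Nn. G (gi l')) = (\<Sum>i<a+b. (\<Sum>l'\<in>{x \<in> Nn. gi x = i}. G (gi l')))"
    by (rule sum.group[symmetric]) (auto simp: Bm_iff)
  also have "\<dots> = (\<Sum>i<a+b. int (tt i) * G i)" by (rule sum.cong[OF refl]) (rule inner)
  finally show ?thesis .
qed

lemma card_INV_K: "int (card (INVof phi)) = Kconst"
proof -
  let ?G = "\<lambda>i. int (hr i) - int (lc i) - int (tt i) + 1"
  have per: "int (card (Aset l') + card (Bset l')) =
      (int (gj l') - int (gj (phi l'))) + ?G (gi l') + (int (tt (gi l') - 1) - int (card (NL l') + card (NG l')))"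
    if l': "l' \<in> Nn" for l'
  proof -
    have lC: "l' \<in> C (gi l')" using l' by (simp add: C_def)
    have mR: "phi l' \<in> R (gi l')" using l' mapsto gi_phiN by (simp add: R_def)
    have i1: "lc (gi l') \<le> gj l'" using cnt_lt(2)[OF lC] .
    have i2: "gj (phi l') \<le> hr (gi l')" using cnt_gt(2)[OF mR] .
    have t1: "1 \<le> tt (gi l')" using tt_pos[OF l'] .
    show ?thesis using cardA[OF l'] cardB[OF l'] i1 i2 t1 by simp
  qed
  have "int (card (INVof phi)) = (\<Sum>l'\<in>Nn. int (card (Aset l') + card (Bset l')))"
    unfolding card_INV_sum by simp
  also have "\<dots> = (\<Sum>l'\<in>Nn. (int (gj l') - int (gj (phi l'))) + ?G (gi l') + (int (tt (gi l') - 1) - int (card (NL l') + card (NG l'))))"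
    using per by (rule sum.cong[OF refl])
  also have "\<dots> = (\<Sum>l'\<in>Nn. int (gj l') - int (gj (phi l'))) + (\<Sum>l'\<in>Nn. ?G (gi l'))
      + ((\<Sum>l'\<in>Nn. int (tt (gi l') - 1)) - (\<Sum>l'\<in>Nn. int (card (NL l') + card (NG l'))))"
    by (simp add: sum.distrib sum_subtractf)
  also have "(\<Sum>l'\<in>Nn. int (tt (gi l') - 1)) - (\<Sum>l'\<in>Nn. int (card (NL l') + card (NG l'))) = 0"
  proof -
    have "(\<Sum>l'\<in>Nn. int (tt (gi l') - 1)) = int (\<Sum>l'\<in>Nn. tt (gi l') - 1)" by (simp only: of_nat_sum)
    also have "\<dots> = int (\<Sum>l'\<in>Nn. card (NL l') + card (NG l'))" by (simp only: pairs_sum)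
    also have "\<dots> = (\<Sum>l'\<in>Nn. int (card (NL l') + card (NG l')))" by (simp only: of_nat_sum)
    finally show ?thesis by simp
  qed
  finally have main: "int (card (INVof phi)) = (\<Sum>l'\<in>Nn. int (gj l') - int (gj (phi l'))) + (\<Sum>l'\<in>Nn. ?G (gi l'))"
    by simp
  show ?thesis using main sum_gj sum_group_gi[of ?G] unfolding Kconst_def by linarith
qed

end

lemma sorted_nth_less_iff:
  fixes S :: "'a::linorder set"
  assumes "finite S" "k < card S" "k' < card S"
  shows "sorted_list_of_set S ! k < sorted_list_of_set S ! k' \<longleftrightarrow> k < k'"
proof -
  let ?xs = "sorted_list_of_set S"
  have sw: "sorted_wrt (<) ?xs" by (rule strict_sorted_list_of_set)
  have len: "length ?xs = card S" by simp
  show ?thesis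
  proof
    assume h: "?xs ! k < ?xs ! k'"
    show "k < k'"
    proof (rule ccontr)
      assume "\<not> k < k'"
      then consider "k = k'" | "k' < k" by linarith
      then show False
      proof cases
        case 1 then show False using h by simp
      next
        case 2 then have "?xs ! k' < ?xs ! k" using sorted_wrt_nth_less[OF sw 2] assms len by simp
        then show False using h by simp
      qed
    qed
  next
    assume "k < k'"
    then show "?xs ! k < ?xs ! k'" using sorted_wrt_nth_less[OF sw] assms len by simp
  qed
qed

context box begin

definition "nn = card Bm"
definition "cs = sorted_list_of_set Bm"
definition "rs = sorted_list_of_set Bn"
definition "ic = the_inv_into {..<nn} (nth cs)"

lemma len_cs: "length cs = nn" by (simp add: cs_def nn_def)
lemma len_rs: "length rs = nn" by (simp add: rs_def nn_def card_Bm_Bn)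

lemma cs_bij: "bij_betw (nth cs) {..<nn} Bm"
  by (rule bij_betw_nth) (auto simp: cs_def nn_def)
lemma rs_bij: "bij_betw (nth rs) {..<nn} Bn"
  by (rule bij_betw_nth) (auto simp: rs_def nn_def card_Bm_Bn)

lemma ic_bij: "bij_betw ic Bm {..<nn}"
  unfolding ic_def by (rule bij_betw_the_inv_into[OF cs_bij])
lemma cs_ic: "l \<in> Bm \<Longrightarrow> cs ! (ic l) = l"
  unfolding ic_def by (rule f_the_inv_into_f_bij_betw[OF cs_bij])
lemma ic_cs: "k < nn \<Longrightarrow> ic (cs ! k) = k"
  unfolding ic_def using cs_bij by (auto intro: the_inv_into_f_f simp: bij_betw_def)
lemma ic_lt: "l \<in> Bm \<Longrightarrow> ic l < nn" using ic_bij by (auto simp: bij_betw_def)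

lemma cs_less: "k < nn \<Longrightarrow> k' < nn \<Longrightarrow> cs ! k < cs ! k' \<longleftrightarrow> k < k'"
  unfolding cs_def nn_def by (rule sorted_nth_less_iff) auto
lemma rs_less: "k < nn \<Longrightarrow> k' < nn \<Longrightarrow> rs ! k < rs ! k' \<longleftrightarrow> k < k'"
  unfolding rs_def nn_def card_Bm_Bn by (rule sorted_nth_less_iff) auto

definition Psi :: "(nat \<Rightarrow> nat) \<Rightarrow> monom \<Rightarrow> monom" where
  "Psi s = (\<lambda>l. if l \<in> Bm then rs ! (Hilbert_Choice.inv s (ic l)) else undefined)"

definition "PhiS = {f. bij_betw f Bm Bn \<and> (\<forall>x. x \<notin> Bm \<longrightarrow> f x = undefined)}"

definition PPf :: "(monom \<Rightarrow> monom) \<Rightarrow> int" where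
  "PPf f = (\<Prod>l\<in>Bm. U_entry (f l) l)"

lemma Mt_PhiS: "Mt \<subseteq> PhiS" by (auto simp: Mt_def PhiS_def)

lemma fin_PhiS: "finite PhiS"
proof -
  have "PhiS \<subseteq> (\<Pi>\<^sub>E l\<in>Bm. Bn)"
    by (auto simp: PhiS_def bij_betw_def PiE_def extensional_def)
  moreover have "finite (\<Pi>\<^sub>E l\<in>Bm. Bn)" by (rule finite_PiE) auto
  ultimately show ?thesis by (rule finite_subset)
qed

lemma PPf_val: "f \<in> PhiS \<Longrightarrow> PPf f = (if f \<in> Mt then 1 else 0)"
proof -
  assume f: "f \<in> PhiS"
  show ?thesis
  proof (cases "\<forall>l\<in>Bm. step_monom (f l) l")
    case True
    then have "f \<in> Mt" using f by (simp add: Mt_def PhiS_def)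
    moreover have "PPf f = 1" unfolding PPf_def using True by (intro prod.neutral) (simp add: U_entry_def)
    ultimately show ?thesis by simp
  next
    case False
    then obtain l where "l \<in> Bm" "\<not> step_monom (f l) l" by blast
    then have "PPf f = 0" unfolding PPf_def by (intro prod_zero) (auto simp: U_entry_def)
    moreover have "f \<notin> Mt" using False by (simp add: Mt_def)
    ultimately show ?thesis by simp
  qed
qed

lemma U_perm_eq: "U_perm a b c = int (card Mt)"
proof -
  have "U_perm a b c = (\<Sum>f\<in>PhiS. PPf f)"
    unfolding U_perm_def Let_def PPf_def PhiS_def Bm_def Bn_def m_def by simp
  also have "\<dots> = (\<Sum>f\<in>PhiS. if f \<in> Mt then 1 else 0)" by (rule sum.cong) (auto simp: PPf_val)
  also have "\<dots> = int (card (PhiS \<inter> Mt))" using fin_PhiS by (simp add: sum.If_cases)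
  also have "PhiS \<inter> Mt = Mt" using Mt_PhiS by blast
  finally show ?thesis .
qed

lemma det_U: "det (U_mat a b c) = (\<Sum>s\<in>{s. s permutes {0..<nn}}. of_int (sign s) * (\<Prod>i=0..<nn. U_entry (rs ! i) (cs ! (s i))))"
proof -
  have U: "U_mat a b c = mat nn nn (\<lambda>(p, q). U_entry (rs ! p) (cs ! q))"
    unfolding U_mat_def Let_def using len_cs len_rs by (simp add: cs_def rs_def Bm_def Bn_def m_def)
  have "det (U_mat a b c) = (\<Sum>s\<in>{s. s permutes {0..<nn}}. signof s * (\<Prod>i=0..<nn. U_mat a b c $$ (i, s i)))"
    unfolding det_def U by simp
  also have "\<dots> = (\<Sum>s\<in>{s. s permutes {0..<nn}}. of_int (sign s) * (\<Prod>i=0..<nn. U_entry (rs ! i) (cs ! (s i))))"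
  proof (rule sum.cong[OF refl])
    fix s assume "s \<in> {s. s permutes {0..<nn}}"
    then have s: "s permutes {0..<nn}" by simp
    have "(\<Prod>i=0..<nn. U_mat a b c $$ (i, s i)) = (\<Prod>i=0..<nn. U_entry (rs ! i) (cs ! (s i)))"
    proof (rule prod.cong[OF refl])
      fix i assume i: "i \<in> {0..<nn}"
      then have "s i < nn" using permutes_in_image[OF s] by simp
      then show "U_mat a b c $$ (i, s i) = U_entry (rs ! i) (cs ! (s i))" using i unfolding U by simp
    qed
    then show "signof s * (\<Prod>i=0..<nn. U_mat a b c $$ (i, s i)) = of_int (sign s) * (\<Prod>i=0..<nn. U_entry (rs ! i) (cs ! (s i)))"
      by simp
  qed
  finally show ?thesis .
qed


definition "ir = the_inv_into {..<nn} (nth rs)"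
lemma ir_bij: "bij_betw ir Bn {..<nn}"
  unfolding ir_def by (rule bij_betw_the_inv_into[OF rs_bij])
lemma rs_ir: "mu \<in> Bn \<Longrightarrow> rs ! (ir mu) = mu"
  unfolding ir_def by (rule f_the_inv_into_f_bij_betw[OF rs_bij])

lemma perm_bij: "s permutes {0..<nn} \<Longrightarrow> bij_betw s {..<nn} {..<nn}"
  using permutes_imp_bij[of s "{0..<nn}"] by (simp add: atLeast0LessThan)

lemma Psi_in: assumes s: "s permutes {0..<nn}" shows "Psi s \<in> PhiS"
proof -
  have si: "Hilbert_Choice.inv s permutes {0..<nn}" using s by (rule permutes_inv)
  have "bij_betw ((nth rs) \<circ> (Hilbert_Choice.inv s \<circ> ic)) Bm Bn"
    by (rule bij_betw_trans[OF bij_betw_trans[OF ic_bij perm_bij[OF si]] rs_bij])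
  moreover have "\<And>l. l \<in> Bm \<Longrightarrow> ((nth rs) \<circ> (Hilbert_Choice.inv s \<circ> ic)) l = Psi s l" by (simp add: Psi_def)
  ultimately have "bij_betw (Psi s) Bm Bn" using bij_betw_cong by blast
  then show ?thesis by (simp add: PhiS_def Psi_def)
qed

lemma Psi_inj: "inj_on Psi {s. s permutes {0..<nn}}"
proof (rule inj_onI)
  fix s t assume s: "s \<in> {s. s permutes {0..<nn}}" and t: "t \<in> {s. s permutes {0..<nn}}" and eq: "Psi s = Psi t"
  have sp: "s permutes {0..<nn}" and tp: "t permutes {0..<nn}" using s t by auto
  have si: "Hilbert_Choice.inv s permutes {0..<nn}" and ti: "Hilbert_Choice.inv t permutes {0..<nn}"
    using sp tp by (auto intro: permutes_inv)
  have "Hilbert_Choice.inv s k = Hilbert_Choice.inv t k" for k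
  proof (cases "k < nn")
    case True
    have cB: "cs ! k \<in> Bm" using cs_bij True by (auto simp: bij_betw_def)
    have "Psi s (cs ! k) = Psi t (cs ! k)" using eq by simp
    then have "rs ! (Hilbert_Choice.inv s k) = rs ! (Hilbert_Choice.inv t k)"
      using cB ic_cs[OF True] by (simp add: Psi_def)
    moreover have "Hilbert_Choice.inv s k < nn" "Hilbert_Choice.inv t k < nn"
      using permutes_in_image[OF si] permutes_in_image[OF ti] True by auto
    ultimately show ?thesis using rs_bij by (auto simp: bij_betw_def dest: inj_onD)
  next
    case False
    then show ?thesis using permutes_not_in[OF si] permutes_not_in[OF ti] by simp
  qed
  then have "Hilbert_Choice.inv s = Hilbert_Choice.inv t" by blast
  then show "s = t" using permutes_inv_inv[OF sp] permutes_inv_inv[OF tp] by metis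
qed

lemma Psi_surj: assumes f: "f \<in> PhiS" shows "\<exists>s. s permutes {0..<nn} \<and> Psi s = f"
proof -
  have fb: "bij_betw f Bm Bn" and fo: "\<And>x. x \<notin> Bm \<Longrightarrow> f x = undefined" using f by (auto simp: PhiS_def)
  define tau where "tau = (\<lambda>k. if k < nn then ir (f (cs ! k)) else k)"
  have "bij_betw (ir \<circ> (f \<circ> nth cs)) {..<nn} {..<nn}"
    by (rule bij_betw_trans[OF bij_betw_trans[OF cs_bij fb] ir_bij])
  moreover have "\<And>k. k \<in> {..<nn} \<Longrightarrow> (ir \<circ> (f \<circ> nth cs)) k = tau k" by (simp add: tau_def)
  ultimately have "bij_betw tau {..<nn} {..<nn}" using bij_betw_cong by blast
  then have tp: "tau permutes {0..<nn}" by (intro bij_imp_permutes) (auto simp: tau_def atLeast0LessThan)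
  define s where "s = Hilbert_Choice.inv tau"
  have sp: "s permutes {0..<nn}" unfolding s_def using tp by (rule permutes_inv)
  have "Psi s = f"
  proof
    fix l show "Psi s l = f l"
    proof (cases "l \<in> Bm")
      case True
      have "Hilbert_Choice.inv s = tau" unfolding s_def by (rule permutes_inv_inv[OF tp])
      then have "Psi s l = rs ! (tau (ic l))" using True by (simp add: Psi_def)
      also have "\<dots> = rs ! (ir (f (cs ! (ic l))))" using ic_lt[OF True] by (simp add: tau_def)
      also have "\<dots> = f l"
      proof -
        have "f l \<in> Bn" using fb True by (auto simp: bij_betw_def)
        then show ?thesis using cs_ic[OF True] rs_ir[of "f l"] by simp
      qed
      finally show ?thesis .
    next
      case False then show ?thesis using fo by (simp add: Psi_def)
    qed
  qed
  then show ?thesis using sp by blast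
qed

lemma Psi_bij: "bij_betw Psi {s. s permutes {0..<nn}} PhiS"
  unfolding bij_betw_def using Psi_inj Psi_in Psi_surj by blast

lemma prod_Psi:
  assumes s: "s permutes {0..<nn}"
  shows "(\<Prod>i=0..<nn. U_entry (rs ! i) (cs ! (s i))) = PPf (Psi s)"
proof -
  let ?h = "\<lambda>i. cs ! (s i)"
  have hb: "bij_betw ?h {0..<nn} Bm"
  proof -
    have "bij_betw ((nth cs) \<circ> s) {..<nn} Bm" by (rule bij_betw_trans[OF perm_bij[OF s] cs_bij])
    then show ?thesis by (simp add: atLeast0LessThan comp_def)
  qed
  have "(\<Prod>i=0..<nn. U_entry (Psi s (?h i)) (?h i)) = PPf (Psi s)"
    unfolding PPf_def using hb by (rule prod.reindex_bij_betw)
  moreover have "Psi s (?h i) = rs ! i" if "i \<in> {0..<nn}" for i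
  proof -
    have "s i < nn" using permutes_in_image[OF s] that by simp
    then have "?h i \<in> Bm" "ic (?h i) = s i" using cs_bij ic_cs by (auto simp: bij_betw_def)
    then show ?thesis using permutes_inverses(2)[OF s] by (simp add: Psi_def)
  qed
  ultimately show ?thesis by (metis (no_types, lifting) prod.cong)
qed

lemma card_INV_Psi:
  assumes s: "s permutes {0..<nn}"
  shows "card (INVof (Psi s)) = card (invs (Hilbert_Choice.inv s) nn)"
proof -
  let ?r = "Hilbert_Choice.inv s"
  have rp: "?r permutes {0..<nn}" using s by (rule permutes_inv)
  let ?g = "\<lambda>(x, y). (cs ! x, cs ! y)"
  have eq: "INVof (Psi s) = ?g ` invs ?r nn"
  proof
    show "INVof (Psi s) \<subseteq> ?g ` invs ?r nn"
    proof
      fix z assume z: "z \<in> INVof (Psi s)"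
      obtain l l' where zz: "z = (l, l')" by (cases z)
      have h: "l \<in> Bm" "l' \<in> Bm" "l < l'" "Psi s l' < Psi s l" using z zz by (auto simp: INVof_def)
      have x: "ic l < nn" "ic l' < nn" using ic_lt h by auto
      have "ic l < ic l'" using cs_less[OF x] cs_ic h by simp
      moreover have "?r (ic l') < ?r (ic l)"
      proof -
        have "?r (ic l) < nn" "?r (ic l') < nn" using permutes_in_image[OF rp] x by auto
        then show ?thesis using rs_less h by (simp add: Psi_def)
      qed
      ultimately have "(ic l, ic l') \<in> invs ?r nn" using x by (simp add: invs_def)
      moreover have "z = ?g (ic l, ic l')" using zz cs_ic h by simp
      ultimately show "z \<in> ?g ` invs ?r nn" by blast
    qed
    show "?g ` invs ?r nn \<subseteq> INVof (Psi s)"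
    proof
      fix z assume "z \<in> ?g ` invs ?r nn"
      then obtain x y where xy: "x < y" "y < nn" "?r y < ?r x" "z = (cs ! x, cs ! y)" by (auto simp: invs_def)
      have x: "x < nn" using xy by simp
      have B: "cs ! x \<in> Bm" "cs ! y \<in> Bm" using cs_bij x xy by (auto simp: bij_betw_def)
      have "cs ! x < cs ! y" using cs_less[OF x xy(2)] xy by simp
      moreover have "Psi s (cs ! y) < Psi s (cs ! x)"
      proof -
        have "?r x < nn" "?r y < nn" using permutes_in_image[OF rp] x xy by auto
        then show ?thesis using rs_less B ic_cs[OF x] ic_cs[OF xy(2)] xy by (simp add: Psi_def)
      qed
      ultimately show "z \<in> INVof (Psi s)" using B xy by (simp add: INVof_def)
    qed
  qed
  have "inj_on ?g (invs ?r nn)"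
  proof (rule inj_onI)
    fix u v assume u: "u \<in> invs ?r nn" and v: "v \<in> invs ?r nn" and e: "?g u = ?g v"
    obtain x y x' y' where uv: "u = (x, y)" "v = (x', y')" by (cases u, cases v)
    have lt: "x < nn" "y < nn" "x' < nn" "y' < nn" using u v uv by (auto simp: invs_def)
    have "cs ! x = cs ! x'" "cs ! y = cs ! y'" using e uv by auto
    then have "x = x'" "y = y'" using ic_cs lt by metis+
    then show "u = v" using uv by simp
  qed
  then show ?thesis unfolding eq by (rule card_image)
qed

lemma sign_Psi:
  assumes s: "s permutes {0..<nn}" and M: "Psi s \<in> Mt"
  shows "sign s = (-1) ^ nat Kconst"
proof -
  interpret M: matching a b c "Psi s" by (rule Mt_matching[OF M])
  have rp: "Hilbert_Choice.inv s permutes {..<nn}" using permutes_inv[OF s] by (simp add: atLeast0LessThan)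
  have "sign s = sign (Hilbert_Choice.inv s)"
    using s by (simp add: sign_inverse permutes_imp_permutation[of "{0..<nn}"])
  also have "\<dots> = (-1) ^ card (invs (Hilbert_Choice.inv s) nn)" by (rule sign_invs[OF rp])
  also have "card (invs (Hilbert_Choice.inv s) nn) = card (INVof (Psi s))" using card_INV_Psi[OF s] by simp
  also have "\<dots> = nat Kconst" using M.card_INV_K by simp
  finally show ?thesis .
qed

lemma det_eq: "det (U_mat a b c) = (-1) ^ nat Kconst * int (card Mt)"
proof -
  define G where "G f = (if f \<in> Mt then (-1) ^ nat Kconst else (0::int))" for f
  have "det (U_mat a b c) = (\<Sum>s\<in>{s. s permutes {0..<nn}}. of_int (sign s) * PPf (Psi s))"
    unfolding det_U by (rule sum.cong[OF refl]) (simp add: prod_Psi)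
  also have "\<dots> = (\<Sum>s\<in>{s. s permutes {0..<nn}}. G (Psi s))"
  proof (rule sum.cong[OF refl])
    fix s assume "s \<in> {s. s permutes {0..<nn}}"
    then have s: "s permutes {0..<nn}" by simp
    show "of_int (sign s) * PPf (Psi s) = G (Psi s)"
      using PPf_val[OF Psi_in[OF s]] sign_Psi[OF s] by (simp add: G_def)
  qed
  also have "\<dots> = (\<Sum>f\<in>PhiS. G f)" using Psi_bij by (rule sum.reindex_bij_betw)
  also have "\<dots> = (\<Sum>f\<in>PhiS \<inter> Mt. (-1) ^ nat Kconst)"
    unfolding G_def using fin_PhiS by (simp add: sum.If_cases)
  also have "PhiS \<inter> Mt = Mt" using Mt_PhiS by blast
  finally show ?thesis by simp
qed

end

context box begin

lemma main_result:
  "card Bm = card Bn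
     \<and> (det (U_mat a b c) = U_perm a b c \<or> det (U_mat a b c) = - U_perm a b c)
     \<and> (\<forall>phi. bij_betw phi Bm Bn \<longrightarrow>
          ((\<Prod>lam \<in> Bm. U_entry (phi lam) lam) \<noteq> 0
            \<longleftrightarrow> (\<forall>lam \<in> Bm. step_monom (phi lam) lam)))
     \<and> (\<exists>F. bij_betw F Mt (box_PP a b c))
     \<and> \<bar>det (U_mat a b c)\<bar> = int (card (box_PP a b c))"
proof (intro conjI)
  show "card Bm = card Bn" by (rule card_Bm_Bn)
  show "det (U_mat a b c) = U_perm a b c \<or> det (U_mat a b c) = - U_perm a b c"
    unfolding det_eq U_perm_eq by (cases "even (nat Kconst)") auto
  show "\<forall>phi. bij_betw phi Bm Bn \<longrightarrow>
          ((\<Prod>lam \<in> Bm. U_entry (phi lam) lam) \<noteq> 0 \<longleftrightarrow> (\<forall>lam \<in> Bm. step_monom (phi lam) lam))"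
  proof (intro allI impI)
    fix phi :: "monom \<Rightarrow> monom"
    have "(\<Prod>lam \<in> Bm. U_entry (phi lam) lam) = 0 \<longleftrightarrow> (\<exists>lam\<in>Bm. U_entry (phi lam) lam = 0)"
      by (rule prod_zero_iff) simp
    then show "(\<Prod>lam \<in> Bm. U_entry (phi lam) lam) \<noteq> 0 \<longleftrightarrow> (\<forall>lam \<in> Bm. step_monom (phi lam) lam)"
      by (auto simp: U_entry_def)
  qed
  show "\<exists>F. bij_betw F Mt (box_PP a b c)" using F_bij by blast
  show "\<bar>det (U_mat a b c)\<bar> = int (card (box_PP a b c))"
  proof -
    have "card Mt = card (box_PP a b c)" using F_bij by (rule bij_betw_same_card)
    moreover have "\<bar>det (U_mat a b c)\<bar> = int (card Mt)"
      unfolding det_eq by (cases "even (nat Kconst)") auto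
    ultimately show ?thesis by simp
  qed
qed

end

theorem theorem2:
  fixes a b c :: nat
  assumes "0 < a" and "0 < b" and "0 < c"
  defines "m \<equiv> a + b + c - 2"
  shows "card (basis_B a b c m) = card (basis_B a b c (m+1))
     \<and> (det (U_mat a b c) = U_perm a b c \<or> det (U_mat a b c) = - U_perm a b c)
     \<and> (\<forall>phi. bij_betw phi (basis_B a b c m) (basis_B a b c (m+1)) \<longrightarrow>
          ((\<Prod>lam \<in> basis_B a b c m. U_entry (phi lam) lam) \<noteq> 0
            \<longleftrightarrow> (\<forall>lam \<in> basis_B a b c m. step_monom (phi lam) lam)))
     \<and> (\<exists>F. bij_betw F
          {phi. bij_betw phi (basis_B a b c m) (basis_B a b c (m+1))
                \<and> (\<forall>x. x \<notin> basis_B a b c m \<longrightarrow> phi x = undefined)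
                \<and> (\<forall>lam \<in> basis_B a b c m. step_monom (phi lam) lam)}
          (box_PP a b c))
     \<and> \<bar>det (U_mat a b c)\<bar> = int (card (box_PP a b c))"
proof -
  have B: "box a b c" using assms by (simp add: box_def)
  have e1: "basis_B a b c m = box.Bm a b c" using box.Bm_def[OF B] box.m_def[OF B] by (simp add: m_def)
  have e2: "basis_B a b c (m+1) = box.Bn a b c" using box.Bn_def[OF B] box.m_def[OF B] by (simp add: m_def)
  have e3: "{phi. bij_betw phi (basis_B a b c m) (basis_B a b c (m+1))
                \<and> (\<forall>x. x \<notin> basis_B a b c m \<longrightarrow> phi x = undefined)
                \<and> (\<forall>lam \<in> basis_B a b c m. step_monom (phi lam) lam)} = box.Mt a b c"
    unfolding e1 e2 box.Mt_def[OF B] ..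
  show ?thesis unfolding e3 unfolding e1 e2 by (rule box.main_result[OF B])
qed

end
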